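(* Let $(X,\mu)$ be a non-atomic probability space with a tree $\mathcal T$, $p>1$, $0<f^p\leq F$, and $0<k<1$. Let $h_k(B)=\frac{(f-B)^p}{(1-k)^{p-1}}+\frac{B^p}{k^{p-1}}$ for $B\in[0,f]$. Then \[ B_p^{\mathcal T}(f,F,k)\leq\sup\left\{\left(F-\frac{(f-B)^p}{(1-k)^{p-1}}\right)\omega_p\!\left(\frac{B^p}{k^{p-1}\left(F-\frac{(f-B)^p}{(1-k)^{p-1}}\right)}\right)^p:\ B\in[0,f],\ h_k(B)\leq F\right\}. \]
   Context: A tree on a non-atomic probability space $(X,\mu)$ is a family $\mathcal T$ of measurable subsets of $X$ such that: (i) $X\in\mathcal T$ and $\mu(I)>0$ for every $I\in\mathcal T$; (ii) for every $I\in\mathcal T$ there is a finite or countable subset $C(I)\subseteq\mathcal T$ with at least two elements, whose elements are pairwise disjoint subsets of $I$ with union $I$; (iii) $\mathcal T=\bigcup_{m\geq0}\mathcal T_{(m)}$, where $\mathcal T_{(0)}=\{X\}$ and $\mathcal T_{(m+1)}=\bigcup_{I\in\mathcal T_{(m)}}C(I)$; (iv) $\lim_{m\to\infty}\sup_{I\in\mathcal T_{(m)}}\mu(I)=0$; (v) $\mathcal T$ differentiates $L^1(X,\mu)$. The dyadic maximal operator is $M_{\mathcal T}\phi(x)=\sup\{\frac{1}{\mu(I)}\int_I|\phi|\,d\mu: x\in I\in\mathcal T\}$. The Bellman function is $B_p^{\mathcal T}(f,F,k)=\sup\{\int_K(M_{\mathcal T}\phi)^p\,d\mu:\ \phi\geq0,\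 \int_X\phi\,d\mu=f,\ \int_X\phi^p\,d\mu=F,\ K\subseteq X\text{ measurable with }\mu(K)=k\}$. $\omega_p:[0,1]\to[1,\frac{p}{p-1}]$ is the inverse of $H_p(z)=pz^{p-1}-(p-1)z^p$ restricted to $[1,\frac{p}{p-1}]$. Note that $h_k(B)\le F$ ensures the argument of $\omega_p$ lies in $[0,1]$. *)

theory Defs
  imports "HOL-Probability.Probability"
begin

definition non_atomic :: "'a measure \<Rightarrow> bool" where
  "non_atomic M \<longleftrightarrow> (\<forall>A\<in>sets M. measure M A > 0 \<longrightarrow>
      (\<exists>B\<in>sets M. B \<subseteq> A \<and> 0 < measure M B \<and> measure M B < measure M A))"

fun tree_level :: "'a measure \<Rightarrow> ('a set \<Rightarrow> 'a set set) \<Rightarrow> nat \<Rightarrow> 'a set set" where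
  "tree_level M C 0 = {space M}"
| "tree_level M C (Suc m) = \<Union> (C ` tree_level M C m)"

definition differentiates_L1 :: "'a measure \<Rightarrow> 'a set set \<Rightarrow> bool" where
  "differentiates_L1 M T \<longleftrightarrow> (\<forall>\<phi> :: 'a \<Rightarrow> real. integrable M \<phi> \<longrightarrow>
     (AE x in M. \<forall>e>0. \<exists>d>0. \<forall>I\<in>T. x \<in> I \<longrightarrow> measure M I < d \<longrightarrow>
         \<bar>(LINT y:I|M. \<phi> y) / measure M I - \<phi> x\<bar> < e))"

definition is_tree :: "'a measure \<Rightarrow> 'a set set \<Rightarrow> bool" where
  "is_tree M T \<longleftrightarrow>
     space M \<in> T \<and> (\<forall>I\<in>T. I \<in> sets M \<and> measure M I > 0) \<and>
     (\<exists>C :: 'a set \<Rightarrow> 'a set set.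
        (\<forall>I\<in>T. C I \<subseteq> T \<and> countable (C I) \<and> (\<exists>J1\<in>C I. \<exists>J2\<in>C I. J1 \<noteq> J2) \<and>
               disjoint (C I) \<and> (\<forall>J\<in>C I. J \<subseteq> I) \<and> \<Union> (C I) = I) \<and>
        T = (\<Union>m. tree_level M C m) \<and>
        (\<lambda>m. SUP I\<in>tree_level M C m. measure M I) \<longlonglongrightarrow> 0) \<and>
     differentiates_L1 M T"

definition dyadic_max :: "'a measure \<Rightarrow> 'a set set \<Rightarrow> ('a \<Rightarrow> real) \<Rightarrow> 'a \<Rightarrow> ennreal" where
  "dyadic_max M T \<phi> x = (SUP I\<in>{I\<in>T. x \<in> I}.
      (\<integral>\<^sup>+ y. ennreal \<bar>\<phi> y\<bar> * indicator I y \<partial>M) / ennreal (measure M I))"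

definition epow :: "real \<Rightarrow> ennreal \<Rightarrow> ennreal" where
  "epow p t = (if t = \<infinity> then \<infinity> else ennreal (enn2real t powr p))"

definition bellman :: "'a measure \<Rightarrow> 'a set set \<Rightarrow> real \<Rightarrow> real \<Rightarrow> real \<Rightarrow> real \<Rightarrow> ennreal" where
  "bellman M T p f F k = (SUP (\<phi>, K)\<in>{(\<phi>, K). \<phi> \<in> borel_measurable M \<and> (\<forall>x. 0 \<le> \<phi> x) \<and>
        (\<integral>\<^sup>+ x. ennreal (\<phi> x) \<partial>M) = ennreal f \<and>
        (\<integral>\<^sup>+ x. ennreal (\<phi> x powr p) \<partial>M) = ennreal F \<and>
        K \<in> sets M \<and> measure M K = k}.
      \<integral>\<^sup>+ x. epow p (dyadic_max M T \<phi> x) * indicator K x \<partial>M)"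

definition H_p :: "real \<Rightarrow> real \<Rightarrow> real" where
  "H_p p z = p * z powr (p - 1) - (p - 1) * z powr p"

definition omega_p :: "real \<Rightarrow> real \<Rightarrow> real" where
  "omega_p p y = (THE z. z \<in> {1..p / (p - 1)} \<and> H_p p z = y)"

end

theory Submission
  imports Defs
begin


lemma powr_shift1: "z > 0 \<Longrightarrow> z powr a = z powr (a - 1) * (z::real)"
proof -
  assume z: "z > 0"
  have "z powr (a - 1) * z = z powr (a - 1) * z powr 1" using z powr_one[of z] by simp
  also have "\<dots> = z powr a" by (simp only: powr_add[symmetric]) simp
  finally show ?thesis by simp
qed

lemma H_p_factor: "z > 0 \<Longrightarrow> H_p p z = z powr (p-1) * (p - (p-1)*z)"
  unfolding H_p_def using powr_shift1[of z p] by (simp add: algebra_simps)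

lemma H_p_deriv: "z > 0 \<Longrightarrow> (H_p p has_real_derivative (p*(p-1)*z powr (p-2) * (1 - z))) (at z)"
proof -
  assume z: "z > 0"
  have "((\<lambda>z. p * z powr (p - 1) - (p - 1) * z powr p) has_real_derivative
        (p * ((p-1) * z powr (p-1-1)) - (p-1) * (p * z powr (p-1)))) (at z)"
    using z by (auto intro!: derivative_eq_intros)
  moreover have "p * ((p-1) * z powr (p-1-1)) - (p-1) * (p * z powr (p-1)) = p*(p-1)*z powr (p-2) * (1 - z)"
  proof -
    have "z powr (p-1) = z powr (p-2) * z" using z powr_shift1[of z "p-1"] by simp
    then show ?thesis by (simp add: algebra_simps)
  qed
  ultimately show ?thesis unfolding H_p_def[abs_def] by simp
qed

lemma H_p_strict_dec:
  assumes p: "p > 1" and a: "1 \<le> a" "a < b"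
  shows "H_p p b < H_p p a"
proof (rule DERIV_neg_imp_decreasing_open[OF a(2)])
  have der: "\<And>x. a \<le> x \<Longrightarrow> DERIV (H_p p) x :> (p*(p-1)*x powr (p-2) * (1 - x))"
    using a by (intro H_p_deriv) auto
  show "\<exists>y. (H_p p has_real_derivative y) (at x) \<and> y < 0" if "a < x" "x < b" for x
  proof (intro exI conjI)
    show "DERIV (H_p p) x :> (p*(p-1)*x powr (p-2) * (1 - x))" using der that by simp
    show "p*(p-1)*x powr (p-2) * (1 - x) < 0"
      using p a that by (intro mult_pos_neg) auto
  qed
  show "continuous_on {a..b} (H_p p)"
    using der by (intro continuous_at_imp_continuous_on ballI DERIV_isCont) auto
qed

lemma H_p_cont: "continuous_on {1..p/(p-1)} (H_p p)"
  unfolding H_p_def[abs_def] by (intro continuous_intros) auto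

lemma omega_p_props:
  assumes p: "p > 1" and y: "0 \<le> y" "y \<le> 1"
  shows "omega_p p y \<in> {1..p/(p-1)}" "H_p p (omega_p p y) = y"
proof -
  have H1: "H_p p 1 = 1" unfolding H_p_def by simp
  have q: "1 < p/(p-1)" using p by (simp add: field_simps)
  have pp: "(p-1)*(p/(p-1)) = p" using p by simp
  have H0: "H_p p (p/(p-1)) = 0" using H_p_factor[of "p/(p-1)" p] q pp by simp
  obtain z where z0: "1 \<le> z" "z \<le> p/(p-1)" "H_p p z = y"
    using IVT2'[of "H_p p" "p/(p-1)" y 1, OF _ _ _ H_p_cont[of p]] H1 H0 y q by auto
  then have z: "z \<in> {1..p/(p-1)}" "H_p p z = y" by auto
  have uniq: "w = z" if "w \<in> {1..p/(p-1)}" "H_p p w = y" for w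
  proof (rule ccontr)
    assume "w \<noteq> z"
    then have "w < z \<or> z < w" by auto
    then show False
    proof
      assume "w < z" then show False using H_p_strict_dec[OF p, of w z] that z by auto
    next
      assume "z < w" then show False using H_p_strict_dec[OF p, of z w] that z by auto
    qed
  qed
  have "omega_p p y = z" unfolding omega_p_def
  proof (rule the_equality)
    show "z \<in> {1..p / (p - 1)} \<and> H_p p z = y" using z by blast
    show "\<And>w. w \<in> {1..p / (p - 1)} \<and> H_p p w = y \<Longrightarrow> w = z" using uniq by blast
  qed
  then show "omega_p p y \<in> {1..p/(p-1)}" "H_p p (omega_p p y) = y" using z by auto
qed

lemma omega_p_ge:
  assumes p: "p > 1" and y: "0 \<le> y" "y \<le> 1" and z: "0 \<le> z" "y \<le> H_p p z"
  shows "z \<le> omega_p p y"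
proof -
  note om = omega_p_props[OF p y]
  show ?thesis
  proof (cases "z \<le> 1")
    case True then show ?thesis using om by auto
  next
    case False
    show ?thesis
    proof (rule ccontr)
      assume "\<not> z \<le> omega_p p y"
      then have zo: "omega_p p y < z" by auto
      show False
      proof (cases "z \<le> p/(p-1)")
        case True
        then show False using H_p_strict_dec[OF p _ zo] om z by auto
      next
        case False
        then have "p - (p-1)*z < 0" using p by (simp add: field_simps)
        then have "H_p p z < 0" using \<open>\<not> z \<le> 1\<close> by (subst H_p_factor) (auto simp: mult_pos_neg)
        then show False using y z by auto
      qed
    qed
  qed
qed


lemma young_pq:
  fixes a b p :: real
  assumes "p > 1" "a \<ge> 0" "b \<ge> 0"
  shows "a * b \<le> a powr p / p + b powr (p/(p-1)) / (p/(p-1))"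
proof -
  have "1/p + 1/(p/(p-1)) = 1" using assms by (simp add: field_simps)
  moreover have "p/(p-1) > 1" using assms by (simp add: field_simps)
  ultimately show ?thesis using Youngs_inequality[of p "p/(p-1)" a b] assms by simp
qed

lemma ennreal_lin:
  fixes c1 c2 x y :: real
  shows "0 \<le> c1 \<Longrightarrow> 0 \<le> x \<Longrightarrow> 0 \<le> c2 \<Longrightarrow> 0 \<le> y \<Longrightarrow>
    ennreal (c1*x + c2*y) = ennreal c1 * ennreal x + ennreal c2 * ennreal y"
  by (simp add: ennreal_plus ennreal_mult)

lemma holder_nn:
  fixes N :: "'b measure" and a b :: "'b \<Rightarrow> real"
  assumes p: "p > 1" and am[measurable]: "a \<in> borel_measurable N" and bm[measurable]: "b \<in> borel_measurable N"
    and a0: "\<And>x. a x \<ge> 0" and b0: "\<And>x. b x \<ge> 0"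
    and IA: "(\<integral>\<^sup>+x. ennreal (a x powr p) \<partial>N) = ennreal A" and A0: "A \<ge> 0"
    and IB: "(\<integral>\<^sup>+x. ennreal (b x powr (p/(p-1))) \<partial>N) = ennreal B" and B0: "B \<ge> 0"
  shows "(\<integral>\<^sup>+x. ennreal (a x * b x) \<partial>N) \<le> ennreal (A powr (1/p) * B powr ((p-1)/p))"
proof -
  define q where "q = p/(p-1)"
  have q1: "q > 1" using p by (simp add: q_def field_simps)
  have pq: "1/p + 1/q = 1" using p by (simp add: q_def field_simps)
  show ?thesis
  proof (cases "A = 0 \<or> B = 0")
    case True
    have "AE x in N. a x * b x = 0"
    proof (cases "A = 0")
      case True
      then have "(\<integral>\<^sup>+x. ennreal (a x powr p) \<partial>N) = 0" using IA by simp
      then have "AE x in N. ennreal (a x powr p) = 0" by (subst (asm) nn_integral_0_iff_AE) auto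
      then show ?thesis
        by eventually_elim (use a0 in \<open>auto simp: ennreal_eq_0_iff\<close>)
    next
      case False
      then have "B = 0" using \<open>A = 0 \<or> B = 0\<close> by simp
      then have "(\<integral>\<^sup>+x. ennreal (b x powr q) \<partial>N) = 0" using IB by (simp add: q_def)
      then have "AE x in N. ennreal (b x powr q) = 0" by (subst (asm) nn_integral_0_iff_AE) auto
      then show ?thesis
        by eventually_elim (use b0 in \<open>auto simp: ennreal_eq_0_iff\<close>)
    qed
    then have "(\<integral>\<^sup>+x. ennreal (a x * b x) \<partial>N) = (\<integral>\<^sup>+x. 0 \<partial>N)"
      by (intro nn_integral_cong_AE) auto
    then show ?thesis by simp
  next
    case False
    then have Ap: "A > 0" and Bp: "B > 0" using A0 B0 by auto
    define \<alpha> where "\<alpha> = A powr (1/p)"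
    define \<beta> where "\<beta> = B powr (1/q)"
    have al: "\<alpha> > 0" "\<beta> > 0" using Ap Bp by (auto simp: \<alpha>_def \<beta>_def)
    have alp: "\<alpha> powr p = A" using Ap p by (simp add: \<alpha>_def powr_powr)
    have beq: "\<beta> powr q = B" using Bp q1 by (simp add: \<beta>_def powr_powr)
    have pw: "a x * b x \<le> (\<alpha>*\<beta>/(p*A)) * a x powr p + (\<alpha>*\<beta>/(q*B)) * b x powr q" for x
    proof -
      have "(a x/\<alpha>) * (b x/\<beta>) \<le> (a x/\<alpha>) powr p / p + (b x/\<beta>) powr q / q"
        using young_pq[OF p, of "a x/\<alpha>" "b x/\<beta>"] a0 b0 al by (simp add: q_def)
      also have "(a x/\<alpha>) powr p = a x powr p / A" using a0 al alp by (simp add: powr_divide)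
      also have "(b x/\<beta>) powr q = b x powr q / B" using b0 al beq by (simp add: powr_divide)
      finally have "(a x/\<alpha>) * (b x/\<beta>) \<le> a x powr p / A / p + b x powr q / B / q" .
      then have "\<alpha>*\<beta>*((a x/\<alpha>) * (b x/\<beta>)) \<le> \<alpha>*\<beta>*(a x powr p / A / p + b x powr q / B / q)"
        using al by (intro mult_left_mono) auto
      then show ?thesis using al by (simp add: field_simps)
    qed
    have "(\<integral>\<^sup>+x. ennreal (a x * b x) \<partial>N) \<le>
          (\<integral>\<^sup>+x. ennreal (\<alpha>*\<beta>/(p*A)) * ennreal (a x powr p) + ennreal (\<alpha>*\<beta>/(q*B)) * ennreal (b x powr q) \<partial>N)"
    proof (intro nn_integral_mono)
      fix x
      have "ennreal (a x * b x) \<le> ennreal ((\<alpha>*\<beta>/(p*A)) * a x powr p + (\<alpha>*\<beta>/(q*B)) * b x powr q)"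
        using pw by (intro ennreal_leI) auto
      also have "\<dots> = ennreal (\<alpha>*\<beta>/(p*A)) * ennreal (a x powr p) + ennreal (\<alpha>*\<beta>/(q*B)) * ennreal (b x powr q)"
      proof -
        have c: "0 \<le> \<alpha>*\<beta>/(p*A)" "0 \<le> \<alpha>*\<beta>/(q*B)" using al Ap Bp p q1 by auto
        have d: "0 \<le> a x powr p" "0 \<le> b x powr q" by auto
        show ?thesis by (rule ennreal_lin[OF c(1) d(1) c(2) d(2)])
      qed
      finally show "ennreal (a x * b x) \<le> \<dots>" .
    qed
    also have "\<dots> = ennreal (\<alpha>*\<beta>/(p*A)) * (\<integral>\<^sup>+x. ennreal (a x powr p) \<partial>N) + ennreal (\<alpha>*\<beta>/(q*B)) * (\<integral>\<^sup>+x. ennreal (b x powr q) \<partial>N)"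
      by (simp add: nn_integral_add nn_integral_cmult)
    also have "\<dots> = ennreal (\<alpha>*\<beta>/(p*A) * A + \<alpha>*\<beta>/(q*B) * B)"
    proof -
      have c: "0 \<le> \<alpha>*\<beta>/(p*A)" "0 \<le> \<alpha>*\<beta>/(q*B)" using al Ap Bp p q1 by auto
      have IB': "(\<integral>\<^sup>+x. ennreal (b x powr q) \<partial>N) = ennreal B" using IB by (simp add: q_def)
      show ?thesis unfolding IA IB'
        by (rule ennreal_lin[symmetric]) (use c A0 B0 in auto)
    qed
    also have "\<alpha>*\<beta>/(p*A) * A + \<alpha>*\<beta>/(q*B) * B = \<alpha>*\<beta>*(1/p + 1/q)"
      using Ap Bp by (simp add: field_simps)
    also have "\<dots> = A powr (1/p) * B powr ((p-1)/p)"
      using pq by (simp add: \<alpha>_def \<beta>_def q_def)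
    finally show ?thesis .
  qed
qed


lemma layer_cake:
  fixes N :: "'a measure" and h :: "'a \<Rightarrow> ennreal" and w :: "real \<Rightarrow> ennreal"
  assumes sf: "sigma_finite_measure N" and hm[measurable]: "h \<in> borel_measurable N"
    and K[measurable]: "K \<in> sets N" and wm[measurable]: "w \<in> borel_measurable borel"
  shows "(\<integral>\<^sup>+x. (\<integral>\<^sup>+y. w y * indicator {y. 0 \<le> y \<and> ennreal y < h x} y \<partial>lborel) * indicator K x \<partial>N)
       = (\<integral>\<^sup>+y. w y * indicator {0..} y * emeasure N ({x\<in>space N. ennreal y < h x} \<inter> K) \<partial>lborel)"
proof -
  interpret pair_sigma_finite N lborel
    using sf by (simp add: pair_sigma_finite_def lborel.sigma_finite_measure_axioms)
  have "(\<integral>\<^sup>+x. (\<integral>\<^sup>+y. w y * indicator {y. 0 \<le> y \<and> ennreal y < h x} y \<partial>lborel) * indicator K x \<partial>N)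
      = (\<integral>\<^sup>+x. (\<integral>\<^sup>+y. w y * indicator {y. 0 \<le> y \<and> ennreal y < h x} y * indicator K x \<partial>lborel) \<partial>N)"
    by (simp add: nn_integral_multc)
  also have "\<dots> = (\<integral>\<^sup>+y. (\<integral>\<^sup>+x. w y * indicator {y. 0 \<le> y \<and> ennreal y < h x} y * indicator K x \<partial>N) \<partial>lborel)"
  proof (rule Fubini'[symmetric])
    have "Measurable.pred (N \<Otimes>\<^sub>M lborel) (\<lambda>(x, y). 0 \<le> y \<and> ennreal y < h x)"
      by measurable
    then show "(\<lambda>(x, y). w y * indicator {y. 0 \<le> y \<and> ennreal y < h x} y * indicator K x) \<in> borel_measurable (N \<Otimes>\<^sub>M lborel)"
      by (simp add: split_beta' indicator_def pred_def) measurable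
  qed
  also have "\<dots> = (\<integral>\<^sup>+y. w y * indicator {0..} y * emeasure N ({x\<in>space N. ennreal y < h x} \<inter> K) \<partial>lborel)"
  proof (intro nn_integral_cong)
    fix y :: real
    have "(\<integral>\<^sup>+x. w y * indicator {y. 0 \<le> y \<and> ennreal y < h x} y * indicator K x \<partial>N)
        = (\<integral>\<^sup>+x. (w y * indicator {0..} y) * indicator ({x\<in>space N. ennreal y < h x} \<inter> K) x \<partial>N)"
      by (intro nn_integral_cong) (auto simp: indicator_def)
    also have "\<dots> = w y * indicator {0..} y * emeasure N ({x\<in>space N. ennreal y < h x} \<inter> K)"
      by (rule nn_integral_cmult_indicator) measurable
    finally show "(\<integral>\<^sup>+x. w y * indicator {y. 0 \<le> y \<and> ennreal y < h x} y * indicator K x \<partial>N) = \<dots>" .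
  qed
  finally show ?thesis .
qed

lemma powr_integral_Icc:
  fixes q c d :: real
  assumes q: "q > 0" and cd: "0 \<le> c" "c \<le> d" and cq: "0 < c \<or> 1 < q"
  shows "(\<integral>\<^sup>+y. ennreal (q * y powr (q-1)) * indicator {c..d} y \<partial>lborel) = ennreal (d powr q - c powr q)"
proof -
  have cont: "continuous_on {c..d} (\<lambda>y. y powr q)"
    using cd q by (intro continuous_on_powr' continuous_intros) auto
  have der: "((\<lambda>y. y powr q) has_vector_derivative (q * y powr (q-1))) (at y)" if "y \<in> {c<..<d}" for y
  proof -
    have "y > 0" using that cd by auto
    then have "((\<lambda>y. y powr q) has_real_derivative (q * y powr (q-1))) (at y)"
      by (auto intro!: derivative_eq_intros)
    then show ?thesis by (simp add: has_real_derivative_iff_has_vector_derivative)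
  qed
  have hi: "((\<lambda>y. q * y powr (q-1)) has_integral (d powr q - c powr q)) {c..d}"
    using fundamental_theorem_of_calculus_interior[OF cd(2) cont der] by simp
  then have hi2: "((\<lambda>y. if y \<in> {c..d} then q * y powr (q-1) else 0) has_integral (d powr q - c powr q)) UNIV"
    by (simp only: has_integral_restrict_UNIV)
  have "(\<integral>\<^sup>+y. ennreal (if y \<in> {c..d} then q * y powr (q-1) else 0) \<partial>lborel) = ennreal (d powr q - c powr q)"
    by (rule nn_integral_has_integral_lborel[OF _ _ hi2]) (use q in auto)
  moreover have "(\<integral>\<^sup>+y. ennreal (if y \<in> {c..d} then q * y powr (q-1) else 0) \<partial>lborel)
      = (\<integral>\<^sup>+y. ennreal (q * y powr (q-1)) * indicator {c..d} y \<partial>lborel)"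
    by (intro nn_integral_cong) (auto simp: indicator_def)
  ultimately show ?thesis by simp
qed

lemma powr_integral_Ico:
  fixes q c d :: real
  assumes q: "q > 0" and cd: "0 \<le> c" "c \<le> d" and cq: "0 < c \<or> 1 < q"
  shows "(\<integral>\<^sup>+y. ennreal (q * y powr (q-1)) * indicator {c..<d} y \<partial>lborel) = ennreal (d powr q - c powr q)"
proof -
  have "(\<integral>\<^sup>+y. ennreal (q * y powr (q-1)) * indicator {c..<d} y \<partial>lborel)
      = (\<integral>\<^sup>+y. ennreal (q * y powr (q-1)) * indicator {c..d} y \<partial>lborel)"
    by (intro nn_integral_cong_AE) (use AE_lborel_singleton[of d] in \<open>eventually_elim, auto simp: indicator_def\<close>)
  then show ?thesis using powr_integral_Icc[OF assms] by simp
qed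

lemma ennreal_ge_nat_imp_top:
  fixes X :: ennreal
  assumes "\<And>n::nat. ennreal (real n) \<le> X"
  shows "X = \<infinity>"
proof (rule ccontr)
  assume "X \<noteq> \<infinity>"
  then obtain r where r: "X = ennreal r" "0 \<le> r" by (cases X) auto
  obtain n :: nat where "r < real n" using reals_Archimedean2 by blast
  moreover have "real n \<le> r" using assms[of n] r by (simp add: ennreal_le_iff)
  ultimately show False by simp
qed

lemma epow_integral:
  fixes p :: real and a :: ennreal
  assumes p: "p > 1"
  shows "(\<integral>\<^sup>+y. ennreal (p * y powr (p-1)) * indicator {y. 0 \<le> y \<and> ennreal y < a} y \<partial>lborel) = epow p a"
proof (cases "a = \<infinity>")
  case False
  then obtain r where r: "a = ennreal r" "0 \<le> r" by (cases a) auto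
  have "{y. 0 \<le> y \<and> ennreal y < a} = {0..<r}"
    using r by (auto simp: ennreal_less_iff)
  then have "(\<integral>\<^sup>+y. ennreal (p * y powr (p-1)) * indicator {y. 0 \<le> y \<and> ennreal y < a} y \<partial>lborel) = ennreal (r powr p - 0 powr p)"
    using powr_integral_Ico[of p 0 r] p r by simp
  then show ?thesis using r False by (simp add: epow_def)
next
  case True
  have "ennreal (real n) \<le> (\<integral>\<^sup>+y. ennreal (p * y powr (p-1)) * indicator {y. 0 \<le> y \<and> ennreal y < a} y \<partial>lborel)" for n :: nat
  proof -
    have "ennreal (real n) \<le> ennreal ((real n + 1) powr p - 0 powr p)"
    proof (intro ennreal_leI)
      have "real n \<le> real n + 1" by simp
      also have "\<dots> = (real n + 1) powr 1" by simp
      also have "\<dots> \<le> (real n + 1) powr p" using p by (intro powr_mono) auto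
      finally show "real n \<le> (real n + 1) powr p - 0 powr p" by simp
    qed
    also have "\<dots> = (\<integral>\<^sup>+y. ennreal (p * y powr (p-1)) * indicator {0..<real n + 1} y \<partial>lborel)"
      using powr_integral_Ico[of p 0 "real n + 1"] p by simp
    also have "\<dots> \<le> (\<integral>\<^sup>+y. ennreal (p * y powr (p-1)) * indicator {y. 0 \<le> y \<and> ennreal y < a} y \<partial>lborel)"
      using True by (intro nn_integral_mono) (auto simp: indicator_def)
    finally show ?thesis .
  qed
  then have "(\<integral>\<^sup>+y. ennreal (p * y powr (p-1)) * indicator {y. 0 \<le> y \<and> ennreal y < a} y \<partial>lborel) = \<infinity>"
    by (rule ennreal_ge_nat_imp_top)
  then show ?thesis using True by (simp add: epow_def)
qed


definition tavg :: "'a measure \<Rightarrow> ('a \<Rightarrow> real) \<Rightarrow> 'a set \<Rightarrow> ennreal" where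
  "tavg M \<phi> I = (\<integral>\<^sup>+ y. ennreal \<bar>\<phi> y\<bar> * indicator I y \<partial>M) / ennreal (measure M I)"

lemma dyadic_max_tavg: "dyadic_max M T \<phi> x = (SUP I\<in>{I\<in>T. x \<in> I}. tavg M \<phi> I)"
  unfolding dyadic_max_def tavg_def by simp

definition tree_ok :: "'a measure \<Rightarrow> 'a set set \<Rightarrow> ('a set \<Rightarrow> 'a set set) \<Rightarrow> bool" where
  "tree_ok M T C \<longleftrightarrow> space M \<in> T \<and> (\<forall>I\<in>T. I \<in> sets M \<and> measure M I > 0) \<and>
     (\<forall>I\<in>T. C I \<subseteq> T \<and> countable (C I) \<and> disjoint (C I) \<and> (\<forall>J\<in>C I. J \<subseteq> I)) \<and>
     T = (\<Union>m. tree_level M C m)"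

lemma is_tree_obtain:
  assumes "is_tree M T" obtains C where "tree_ok M T C"
proof -
  from assms obtain C where C: "\<forall>I\<in>T. C I \<subseteq> T \<and> countable (C I) \<and> (\<exists>J1\<in>C I. \<exists>J2\<in>C I. J1 \<noteq> J2) \<and>
               disjoint (C I) \<and> (\<forall>J\<in>C I. J \<subseteq> I) \<and> \<Union> (C I) = I" "T = (\<Union>m. tree_level M C m)"
    unfolding is_tree_def by metis
  have "tree_ok M T C" unfolding tree_ok_def
  proof (intro conjI)
    show "space M \<in> T" "\<forall>I\<in>T. I \<in> sets M \<and> 0 < measure M I" using assms unfolding is_tree_def by simp_all
    show "\<forall>I\<in>T. C I \<subseteq> T \<and> countable (C I) \<and> disjoint (C I) \<and> (\<forall>J\<in>C I. J \<subseteq> I)" using C(1) by simp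
    show "T = (\<Union>m. tree_level M C m)" by (rule C(2))
  qed
  then show ?thesis by (rule that)
qed

context
  fixes M :: "'a measure" and T :: "'a set set" and C :: "'a set \<Rightarrow> 'a set set"
  assumes tok: "tree_ok M T C"
begin

lemma tl_sub: "tree_level M C m \<subseteq> T"
proof -
  have "T = (\<Union>m. tree_level M C m)" using tok unfolding tree_ok_def by simp
  then show ?thesis by auto
qed

lemma T_parts: "space M \<in> T" "\<forall>I\<in>T. I \<in> sets M \<and> measure M I > 0"
     "\<forall>I\<in>T. C I \<subseteq> T \<and> countable (C I) \<and> disjoint (C I) \<and> (\<forall>J\<in>C I. J \<subseteq> I)"
     "T = (\<Union>m. tree_level M C m)"
  using tok unfolding tree_ok_def by blast+

lemma T_props: "space M \<in> T" "\<And>I. I \<in> T \<Longrightarrow> I \<in> sets M" "\<And>I. I \<in> T \<Longrightarrow> measure M I > 0"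
  "\<And>I. I \<in> T \<Longrightarrow> C I \<subseteq> T" "\<And>I. I \<in> T \<Longrightarrow> countable (C I)" "\<And>I. I \<in> T \<Longrightarrow> disjoint (C I)"
  "\<And>I J. I \<in> T \<Longrightarrow> J \<in> C I \<Longrightarrow> J \<subseteq> I" "T = (\<Union>m. tree_level M C m)"
  using T_parts by blast+

lemma tl_countable: "countable (tree_level M C m)"
proof (induction m)
  case 0 then show ?case by simp
next
  case (Suc m)
  have "\<And>I. I \<in> tree_level M C m \<Longrightarrow> countable (C I)" using tl_sub T_props(5) by blast
  then show ?case using Suc by simp
qed

lemma T_countable: "countable T"
proof -
  have "countable (\<Union>m. tree_level M C m)"
    using tl_countable by (intro countable_UN) auto
  then show ?thesis using T_props(8) by simp
qed

lemma tl_ancestor: "J \<in> tree_level M C n \<Longrightarrow> m \<le> n \<Longrightarrow> \<exists>I\<in>tree_level M C m. J \<subseteq> I"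
proof (induction n arbitrary: J)
  case 0 then show ?case by auto
next
  case (Suc n)
  show ?case
  proof (cases "m = Suc n")
    case True then show ?thesis using Suc.prems by blast
  next
    case False
    then have mn: "m \<le> n" using Suc.prems by simp
    from Suc.prems obtain I' where I': "I' \<in> tree_level M C n" "J \<in> C I'" by auto
    have "J \<subseteq> I'" using I' tl_sub T_props(7) by blast
    moreover obtain I where "I \<in> tree_level M C m" "I' \<subseteq> I" using Suc.IH[OF I'(1) mn] by blast
    ultimately show ?thesis by blast
  qed
qed

lemma tl_same: "I \<in> tree_level M C m \<Longrightarrow> J \<in> tree_level M C m \<Longrightarrow> I = J \<or> I \<inter> J = {}"
proof (induction m arbitrary: I J)
  case 0 then show ?case by simp
next
  case (Suc m)
  from Suc.prems obtain I' J' where I': "I' \<in> tree_level M C m" "I \<in> C I'" and J': "J' \<in> tree_level M C m" "J \<in> C J'"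
    by auto
  show ?case
  proof (cases "I' = J'")
    case True
    then have "disjoint (C I')" using I' tl_sub T_props(6) by blast
    then show ?thesis using I' J' True unfolding disjoint_def by blast
  next
    case False
    then have "I' \<inter> J' = {}" using Suc.IH[OF I'(1) J'(1)] by blast
    moreover have "I \<subseteq> I'" "J \<subseteq> J'" using I' J' tl_sub T_props(7) by blast+
    ultimately show ?thesis by blast
  qed
qed

lemma tl_nested: "I \<in> tree_level M C m \<Longrightarrow> J \<in> tree_level M C n \<Longrightarrow> m \<le> n \<Longrightarrow> J \<subseteq> I \<or> I \<inter> J = {}"
proof -
  assume a: "I \<in> tree_level M C m" "J \<in> tree_level M C n" "m \<le> n"
  obtain I' where I': "I' \<in> tree_level M C m" "J \<subseteq> I'" using tl_ancestor[OF a(2) a(3)] by blast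
  from tl_same[OF a(1) I'(1)] show ?thesis using I' by blast
qed

lemma T_nested: "I \<in> T \<Longrightarrow> J \<in> T \<Longrightarrow> I \<subseteq> J \<or> J \<subseteq> I \<or> I \<inter> J = {}"
proof -
  assume "I \<in> T" "J \<in> T"
  then obtain m n where mn: "I \<in> tree_level M C m" "J \<in> tree_level M C n" using T_props(8) by blast
  then show ?thesis
  proof (cases "m \<le> n")
    case True then show ?thesis using tl_nested[of I m J n] mn by blast
  next
    case False then show ?thesis using tl_nested[of J n I m] mn by auto
  qed
qed


lemma dmax_eq_SUP:
  assumes x: "x \<in> space M"
  shows "dyadic_max M T \<phi> x = (SUP I\<in>T. tavg M \<phi> I * indicator I x)"
proof (rule antisym)
  show "dyadic_max M T \<phi> x \<le> (SUP I\<in>T. tavg M \<phi> I * indicator I x)"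
    unfolding dyadic_max_tavg
  proof (rule SUP_least)
    fix I assume "I \<in> {I \<in> T. x \<in> I}"
    then have "I \<in> T" "x \<in> I" by auto
    then have "tavg M \<phi> I = tavg M \<phi> I * indicator I x" by simp
    also have "\<dots> \<le> (SUP I\<in>T. tavg M \<phi> I * indicator I x)" using \<open>I \<in> T\<close> by (rule SUP_upper)
    finally show "tavg M \<phi> I \<le> \<dots>" .
  qed
  show "(SUP I\<in>T. tavg M \<phi> I * indicator I x) \<le> dyadic_max M T \<phi> x"
    unfolding dyadic_max_tavg
  proof (rule SUP_least)
    fix I assume I: "I \<in> T"
    show "tavg M \<phi> I * indicator I x \<le> (SUP I\<in>{I \<in> T. x \<in> I}. tavg M \<phi> I)"
    proof (cases "x \<in> I")
      case True
      then have "tavg M \<phi> I * indicator I x = tavg M \<phi> I" by simp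
      also have "\<dots> \<le> (SUP I\<in>{I \<in> T. x \<in> I}. tavg M \<phi> I)" using I True by (intro SUP_upper) auto
      finally show ?thesis .
    qed simp
  qed
qed

lemma dmax_measurable: "dyadic_max M T \<phi> \<in> borel_measurable M"
proof -
  have "(\<lambda>x. SUP I\<in>T. tavg M \<phi> I * indicator I x) \<in> borel_measurable M"
  proof (rule borel_measurable_SUP[OF T_countable])
    fix I assume "I \<in> T"
    then have [measurable]: "I \<in> sets M" using T_props(2) by blast
    show "(\<lambda>x. tavg M \<phi> I * indicator I x) \<in> borel_measurable M" by measurable
  qed
  moreover have "dyadic_max M T \<phi> \<in> borel_measurable M \<longleftrightarrow> (\<lambda>x. SUP I\<in>T. tavg M \<phi> I * indicator I x) \<in> borel_measurable M"
    by (rule measurable_cong) (rule dmax_eq_SUP)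
  ultimately show ?thesis by simp
qed

lemma dmax_ge: "I \<in> T \<Longrightarrow> x \<in> I \<Longrightarrow> tavg M \<phi> I \<le> dyadic_max M T \<phi> x"
  unfolding dyadic_max_tavg by (intro SUP_upper) auto

definition maxfam :: "('a \<Rightarrow> real) \<Rightarrow> real \<Rightarrow> 'a set set" where
  "maxfam \<phi> lam = {I\<in>T. ennreal lam < tavg M \<phi> I \<and> (\<forall>J\<in>T. I \<subset> J \<longrightarrow> tavg M \<phi> J \<le> ennreal lam)}"

lemma maxfam_cover:
  assumes x: "x \<in> space M" and lt: "ennreal lam < dyadic_max M T \<phi> x"
  shows "\<exists>I\<in>maxfam \<phi> lam. x \<in> I"
proof -
  from lt obtain I0 where I0: "I0 \<in> T" "x \<in> I0" "ennreal lam < tavg M \<phi> I0"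
    unfolding dyadic_max_tavg less_SUP_iff by blast
  define P where "P m \<longleftrightarrow> (\<exists>I\<in>tree_level M C m. x \<in> I \<and> ennreal lam < tavg M \<phi> I)" for m
  obtain m0 where "I0 \<in> tree_level M C m0" using I0 T_props(8) by blast
  then have "P m0" using I0 unfolding P_def by blast
  define m where "m = (LEAST m. P m)"
  have Pm: "P m" unfolding m_def by (rule LeastI) fact
  have minm: "\<not> P k" if "k < m" for k using that unfolding m_def by (rule not_less_Least)
  from Pm obtain I where I: "I \<in> tree_level M C m" "x \<in> I" "ennreal lam < tavg M \<phi> I"
    unfolding P_def by blast
  have "I \<in> maxfam \<phi> lam" unfolding maxfam_def
  proof (intro CollectI conjI ballI impI)
    show "I \<in> T" using I tl_sub by blast
    show "ennreal lam < tavg M \<phi> I" by fact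
    fix J assume J: "J \<in> T" "I \<subset> J"
    show "tavg M \<phi> J \<le> ennreal lam"
    proof (rule ccontr)
      assume "\<not> tavg M \<phi> J \<le> ennreal lam"
      then have Jl: "ennreal lam < tavg M \<phi> J" by simp
      obtain n where n: "J \<in> tree_level M C n" using J T_props(8) by blast
      show False
      proof (cases "n < m")
        case True
        then have "P n" unfolding P_def using n J I Jl by blast
        then show False using minm True by blast
      next
        case False
        then have "J \<subseteq> I \<or> I \<inter> J = {}" using tl_nested[OF I(1) n] by simp
        then show False using J I by blast
      qed
    qed
  qed
  then show ?thesis using I by blast
qed

lemma maxfam_sub:
  assumes "I \<in> maxfam \<phi> lam"
  shows "I \<subseteq> {x\<in>space M. ennreal lam < dyadic_max M T \<phi> x}"
proof -
  have I: "I \<in> T" "ennreal lam < tavg M \<phi> I" using assms unfolding maxfam_def by auto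
  have "I \<subseteq> space M" using T_props(2)[OF I(1)] sets.sets_into_space by blast
  moreover have "ennreal lam < dyadic_max M T \<phi> x" if "x \<in> I" for x
    using I(2) dmax_ge[OF I(1) that] by (rule less_le_trans)
  ultimately show ?thesis by blast
qed

lemma maxfam_disj: "disjoint_family_on (\<lambda>I. I) (maxfam \<phi> lam)"
proof (unfold disjoint_family_on_def, intro ballI impI)
  fix I J assume I: "I \<in> maxfam \<phi> lam" and J: "J \<in> maxfam \<phi> lam" and ne: "I \<noteq> J"
  have IT: "I \<in> T" "ennreal lam < tavg M \<phi> I" "\<forall>K\<in>T. I \<subset> K \<longrightarrow> tavg M \<phi> K \<le> ennreal lam"
    using I unfolding maxfam_def by auto
  have JT: "J \<in> T" "ennreal lam < tavg M \<phi> J" "\<forall>K\<in>T. J \<subset> K \<longrightarrow> tavg M \<phi> K \<le> ennreal lam"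
    using J unfolding maxfam_def by auto
  have "\<not> I \<subset> J" using IT(3) JT(1,2) by (meson not_le)
  moreover have "\<not> J \<subset> I" using JT(3) IT(1,2) by (meson not_le)
  ultimately show "I \<inter> J = {}" using T_nested[OF IT(1) JT(1)] ne by blast
qed

lemma maxfam_union: "{x\<in>space M. ennreal lam < dyadic_max M T \<phi> x} = \<Union>(maxfam \<phi> lam)"
  using maxfam_cover maxfam_sub by blast

lemma weak_type:
  assumes fin: "finite_measure M" and phim[measurable]: "\<phi> \<in> borel_measurable M" and phi0: "\<And>x. 0 \<le> \<phi> x"
    and lam: "0 \<le> lam"
  shows "ennreal lam * emeasure M {x\<in>space M. ennreal lam < dyadic_max M T \<phi> x}
     \<le> (\<integral>\<^sup>+x. ennreal (\<phi> x) * indicator {x\<in>space M. ennreal lam < dyadic_max M T \<phi> x} x \<partial>M)"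
proof -
  let ?S = "{x\<in>space M. ennreal lam < dyadic_max M T \<phi> x}"
  let ?F = "maxfam \<phi> lam"
  have cF: "countable ?F" using T_countable unfolding maxfam_def by (rule countable_subset[rotated]) auto
  have sF: "\<And>I. I \<in> ?F \<Longrightarrow> I \<in> sets M" using T_props(2) unfolding maxfam_def by auto
  have S: "?S = (\<Union>I\<in>?F. I)" using maxfam_union by simp
  have e1: "emeasure M ?S = (\<integral>\<^sup>+I. emeasure M I \<partial>count_space ?F)"
    unfolding S by (rule emeasure_UN_countable[OF sF cF maxfam_disj])
  have dm: "(\<lambda>x. ennreal (\<phi> x)) \<in> borel_measurable M" by measurable
  have sS: "?S \<in> sets M" using S sF cF by (metis sets.countable_UN'')
  have "(\<integral>\<^sup>+x. ennreal (\<phi> x) * indicator ?S x \<partial>M) = emeasure (density M (\<lambda>x. ennreal (\<phi> x))) ?S"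
    using emeasure_density[OF dm sS] by simp
  also have "\<dots> = (\<integral>\<^sup>+I. emeasure (density M (\<lambda>x. ennreal (\<phi> x))) I \<partial>count_space ?F)"
    unfolding S by (rule emeasure_UN_countable[OF _ cF maxfam_disj]) (use sF in auto)
  also have "\<dots> = (\<integral>\<^sup>+I. (\<integral>\<^sup>+x. ennreal (\<phi> x) * indicator I x \<partial>M) \<partial>count_space ?F)"
    by (intro nn_integral_cong) (use emeasure_density[OF dm] sF in auto)
  finally have e2: "(\<integral>\<^sup>+x. ennreal (\<phi> x) * indicator ?S x \<partial>M) = \<dots>" .
  have each: "ennreal lam * emeasure M I \<le> (\<integral>\<^sup>+x. ennreal (\<phi> x) * indicator I x \<partial>M)" if I: "I \<in> ?F" for I
  proof -
    have IT: "I \<in> T" and lt: "ennreal lam < tavg M \<phi> I" using I unfolding maxfam_def by auto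
    have mp: "measure M I > 0" using T_props(3)[OF IT] .
    have em: "emeasure M I = ennreal (measure M I)"
      using fin by (simp add: finite_measure.emeasure_eq_measure)
    let ?b = "(\<integral>\<^sup>+x. ennreal (\<phi> x) * indicator I x \<partial>M)"
    have tv: "tavg M \<phi> I = ?b / ennreal (measure M I)"
      unfolding tavg_def using phi0 by simp
    have "ennreal lam * ennreal (measure M I) \<le> ?b / ennreal (measure M I) * ennreal (measure M I)"
      using lt tv by (intro mult_right_mono) auto
    also have "\<dots> = ?b" using mp by (simp add: ennreal_divide_times ennreal_divide_self)
    finally show ?thesis using em by simp
  qed
  have "ennreal lam * emeasure M ?S = (\<integral>\<^sup>+I. ennreal lam * emeasure M I \<partial>count_space ?F)"
    unfolding e1 by (simp add: nn_integral_cmult)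
  also have "\<dots> \<le> (\<integral>\<^sup>+I. (\<integral>\<^sup>+x. ennreal (\<phi> x) * indicator I x \<partial>M) \<partial>count_space ?F)"
    by (intro nn_integral_mono) (use each in auto)
  finally show ?thesis using e2 by simp
qed

end


lemma ennreal_less_approx:
  fixes y :: real and a :: ennreal
  assumes "ennreal y < a" "0 \<le> y"
  shows "\<exists>n::nat. ennreal (y + 1 / Suc n) < a"
proof (cases "a = \<infinity>")
  case True then show ?thesis by simp
next
  case False
  then obtain r where r: "a = ennreal r" "0 \<le> r" by (cases a) auto
  then have "y < r" using assms by (simp add: ennreal_less_iff)
  then obtain n :: nat where "inverse (real (Suc n)) < r - y"
    using reals_Archimedean[of "r - y"] by auto
  then have "y + 1 / Suc n < r" by (simp add: field_simps)
  moreover have "0 < r" using \<open>y < r\<close> assms(2) by simp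
  ultimately have "ennreal (y + 1 / Suc n) < ennreal r" by (intro ennreal_lessI)
  then show ?thesis using r by blast
qed

lemma rc_measure:
  fixes h :: "'a \<Rightarrow> ennreal"
  assumes fin: "finite_measure M" and hm[measurable]: "h \<in> borel_measurable M"
    and t: "t < measure M {x\<in>space M. ennreal y < h x}" and y: "0 \<le> y"
  shows "\<exists>y'>y. t < measure M {x\<in>space M. ennreal y' < h x}"
proof -
  define A where "A n = {x\<in>space M. ennreal (y + 1 / Suc n) < h x}" for n :: nat
  have As: "range A \<subseteq> sets M" unfolding A_def by auto
  have inc: "incseq A"
  proof (intro monoI subsetI)
    fix m n :: nat and x assume mn: "m \<le> n" and x: "x \<in> A m"
    have "1 / real (Suc n) \<le> 1 / Suc m" using mn by (intro divide_left_mono) auto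
    then have "ennreal (y + 1 / Suc n) \<le> ennreal (y + 1 / Suc m)" by (intro ennreal_leI) simp
    then show "x \<in> A n" using x unfolding A_def by (auto intro: le_less_trans)
  qed
  have U: "(\<Union>n. A n) = {x\<in>space M. ennreal y < h x}"
  proof
    show "(\<Union>n. A n) \<subseteq> {x\<in>space M. ennreal y < h x}"
    proof
      fix x assume "x \<in> (\<Union>n. A n)"
      then obtain n where "x \<in> space M" "ennreal (y + 1 / Suc n) < h x" unfolding A_def by auto
      moreover have "ennreal y \<le> ennreal (y + 1 / Suc n)" by (intro ennreal_leI) simp
      ultimately show "x \<in> {x\<in>space M. ennreal y < h x}" by (auto intro: le_less_trans)
    qed
    show "{x\<in>space M. ennreal y < h x} \<subseteq> (\<Union>n. A n)"
      using ennreal_less_approx[OF _ y] unfolding A_def by blast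
  qed
  have "(\<lambda>n. measure M (A n)) \<longlonglongrightarrow> measure M {x\<in>space M. ennreal y < h x}"
    using finite_measure.finite_Lim_measure_incseq[OF fin As inc] U by simp
  then have "eventually (\<lambda>n. t < measure M (A n)) sequentially"
    using t by (rule order_tendstoD(1))
  then obtain n where "t < measure M (A n)" by (auto dest: eventually_happens)
  then show ?thesis unfolding A_def by (intro exI[of _ "y + 1 / Suc n"]) auto
qed

lemma id_integral:
  fixes a :: ennreal
  shows "(\<integral>\<^sup>+y. indicator {y. 0 \<le> y \<and> ennreal y < a} y \<partial>lborel) = a"
proof (cases "a = \<infinity>")
  case False
  then obtain r where r: "a = ennreal r" "0 \<le> r" by (cases a) auto
  have "{y. 0 \<le> y \<and> ennreal y < a} = {0..<r}"
    using r by (auto simp: ennreal_less_iff)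
  then show ?thesis using r by simp
next
  case True
  then have "{y. 0 \<le> y \<and> ennreal y < a} = {0..}" by auto
  moreover have "emeasure lborel {0::real..} = \<infinity>"
  proof (rule ennreal_ge_nat_imp_top)
    fix n :: nat
    have "ennreal (real n) = emeasure lborel {0..<real n}" by simp
    also have "\<dots> \<le> emeasure lborel {0::real..}" by (intro emeasure_mono) auto
    finally show "ennreal (real n) \<le> emeasure lborel {0::real..}" .
  qed
  ultimately show ?thesis using True by simp
qed

definition dfun :: "'a measure \<Rightarrow> ('a \<Rightarrow> real) \<Rightarrow> real \<Rightarrow> real" where
  "dfun M \<phi> y = measure M {x\<in>space M. ennreal y < ennreal (\<phi> x)}"

definition psi :: "'a measure \<Rightarrow> ('a \<Rightarrow> real) \<Rightarrow> real \<Rightarrow> ennreal" where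
  "psi M \<phi> t = (SUP y\<in>{y. 0 \<le> y \<and> t < dfun M \<phi> y}. ennreal y)"

locale rearr =
  fixes M :: "'a measure" and \<phi> :: "'a \<Rightarrow> real" and f :: real
  assumes ps: "prob_space M" and phim[measurable]: "\<phi> \<in> borel_measurable M" and phi0: "\<And>x. 0 \<le> \<phi> x"
    and intf: "(\<integral>\<^sup>+x. ennreal (\<phi> x) \<partial>M) = ennreal f" and f0: "0 \<le> f"
begin

lemma fin: "finite_measure M" using ps by (simp add: prob_space_def)

lemma d_anti: "y1 \<le> y2 \<Longrightarrow> dfun M \<phi> y2 \<le> dfun M \<phi> y1"
  unfolding dfun_def
  by (intro finite_measure.finite_measure_mono[OF fin]) (auto intro: le_less_trans ennreal_leI)

lemma d_nonneg: "0 \<le> dfun M \<phi> y" unfolding dfun_def by simp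

lemma d_le1: "dfun M \<phi> y \<le> 1"
  unfolding dfun_def using prob_space.prob_le_1[OF ps] by simp

lemma d_rc: "t < dfun M \<phi> y \<Longrightarrow> 0 \<le> y \<Longrightarrow> \<exists>y'>y. t < dfun M \<phi> y'"
  unfolding dfun_def by (rule rc_measure[OF fin]) auto

lemma d_markov:
  assumes y: "0 \<le> y" shows "y * dfun M \<phi> y \<le> f"
proof -
  let ?S = "{x\<in>space M. ennreal y < ennreal (\<phi> x)}"
  have "ennreal y * emeasure M ?S = (\<integral>\<^sup>+x. ennreal y * indicator ?S x \<partial>M)"
    by (subst nn_integral_cmult_indicator) auto
  also have "\<dots> \<le> (\<integral>\<^sup>+x. ennreal (\<phi> x) \<partial>M)"
    by (intro nn_integral_mono) (auto simp: indicator_def less_imp_le)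
  finally have "ennreal y * emeasure M ?S \<le> ennreal f" using intf by simp
  moreover have "emeasure M ?S = ennreal (dfun M \<phi> y)"
    unfolding dfun_def using fin by (simp add: finite_measure.emeasure_eq_measure)
  ultimately have "ennreal (y * dfun M \<phi> y) \<le> ennreal f" using y d_nonneg[of y] by (simp add: ennreal_mult)
  moreover have "0 \<le> f" by (rule f0)
  ultimately show ?thesis by (simp add: ennreal_le_iff)
qed


lemma psi_less_iff:
  assumes y: "0 \<le> y"
  shows "ennreal y < psi M \<phi> t \<longleftrightarrow> t < dfun M \<phi> y"
proof
  assume "t < dfun M \<phi> y"
  then obtain y' where y': "y < y'" "t < dfun M \<phi> y'" using d_rc y by blast
  have "ennreal y < ennreal y'" using y y' by (intro ennreal_lessI) auto
  also have "ennreal y' \<le> psi M \<phi> t" unfolding psi_def using y y' by (intro SUP_upper) auto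
  finally show "ennreal y < psi M \<phi> t" .
next
  assume "ennreal y < psi M \<phi> t"
  then obtain z where z: "0 \<le> z" "t < dfun M \<phi> z" "ennreal y < ennreal z"
    unfolding psi_def less_SUP_iff by blast
  then have "y < z" using ennreal_less_iff[OF y] by simp
  then show "t < dfun M \<phi> y" using z d_anti[of y z] by simp
qed

lemma psi_anti: "t1 \<le> t2 \<Longrightarrow> psi M \<phi> t2 \<le> psi M \<phi> t1"
  unfolding psi_def by (intro SUP_subset_mono) auto

lemma psi_meas[measurable]: "psi M \<phi> \<in> borel_measurable borel"
proof (rule borel_measurableI_greater)
  fix a :: ennreal
  show "{t \<in> space borel. a < psi M \<phi> t} \<in> sets borel"
  proof (cases "a = \<infinity>")
    case True then show ?thesis by simp
  next
    case False
    then obtain y where y: "a = ennreal y" "0 \<le> y" by (cases a) auto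
    then have "{t \<in> space borel. a < psi M \<phi> t} = {..<dfun M \<phi> y}"
      using psi_less_iff[OF y(2)] by auto
    then show ?thesis by simp
  qed
qed

lemma psi_fin:
  assumes t: "0 < t" shows "psi M \<phi> t \<le> ennreal (f / t)"
  unfolding psi_def
proof (rule SUP_least)
  fix y assume "y \<in> {y. 0 \<le> y \<and> t < dfun M \<phi> y}"
  then have y: "0 \<le> y" "t < dfun M \<phi> y" by auto
  have "y * t \<le> y * dfun M \<phi> y" using y by (intro mult_left_mono) auto
  also have "\<dots> \<le> f" using d_markov[OF y(1)] .
  finally have "y \<le> f / t" using t by (simp add: field_simps)
  then show "ennreal y \<le> ennreal (f / t)" by (rule ennreal_leI)
qed

lemma psi_level:
  assumes y: "0 \<le> y" and c: "0 \<le> c"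
  shows "emeasure lborel ({t. ennreal y < psi M \<phi> t} \<inter> {0<..c}) = ennreal (min c (dfun M \<phi> y))"
proof -
  have eq: "{t. ennreal y < psi M \<phi> t} \<inter> {0<..c} = {t. t < dfun M \<phi> y} \<inter> {0<..c}"
    using psi_less_iff[OF y] by auto
  show ?thesis
  proof (cases "c < dfun M \<phi> y")
    case True
    then have "{t. t < dfun M \<phi> y} \<inter> {0<..c} = {0<..c}" by auto
    then show ?thesis using eq True c by simp
  next
    case False
    then have "{t. t < dfun M \<phi> y} \<inter> {0<..c} = {0<..<dfun M \<phi> y}" by auto
    then show ?thesis using eq False d_nonneg[of y] by simp
  qed
qed

lemma sfM: "sigma_finite_measure M"
  using fin unfolding finite_measure_def by simp

lemma lc_M:
  assumes S[measurable]: "S \<in> sets M" and p: "p > 1"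
  shows "(\<integral>\<^sup>+x. ennreal (\<phi> x powr p) * indicator S x \<partial>M) =
    (\<integral>\<^sup>+y. ennreal (p*y powr (p-1)) * indicator {0..} y * emeasure M ({x\<in>space M. ennreal y < ennreal (\<phi> x)} \<inter> S) \<partial>lborel)"
proof -
  have "(\<integral>\<^sup>+x. ennreal (\<phi> x powr p) * indicator S x \<partial>M) =
      (\<integral>\<^sup>+x. (\<integral>\<^sup>+y. ennreal (p*y powr (p-1)) * indicator {y. 0 \<le> y \<and> ennreal y < ennreal (\<phi> x)} y \<partial>lborel) * indicator S x \<partial>M)"
    by (intro nn_integral_cong) (simp add: epow_integral[OF p] epow_def phi0)
  also have "\<dots> = (\<integral>\<^sup>+y. ennreal (p*y powr (p-1)) * indicator {0..} y * emeasure M ({x\<in>space M. ennreal y < ennreal (\<phi> x)} \<inter> S) \<partial>lborel)"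
    by (rule layer_cake[OF sfM]) auto
  finally show ?thesis .
qed

lemma lc_M1:
  assumes S[measurable]: "S \<in> sets M"
  shows "(\<integral>\<^sup>+x. ennreal (\<phi> x) * indicator S x \<partial>M) =
    (\<integral>\<^sup>+y. indicator {0..} y * emeasure M ({x\<in>space M. ennreal y < ennreal (\<phi> x)} \<inter> S) \<partial>lborel)"
proof -
  have "(\<integral>\<^sup>+x. ennreal (\<phi> x) * indicator S x \<partial>M) =
      (\<integral>\<^sup>+x. (\<integral>\<^sup>+y. 1 * indicator {y. 0 \<le> y \<and> ennreal y < ennreal (\<phi> x)} y \<partial>lborel) * indicator S x \<partial>M)"
    by (intro nn_integral_cong) (simp add: id_integral)
  also have "\<dots> = (\<integral>\<^sup>+y. 1 * indicator {0..} y * emeasure M ({x\<in>space M. ennreal y < ennreal (\<phi> x)} \<inter> S) \<partial>lborel)"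
    by (rule layer_cake[OF sfM]) auto
  finally show ?thesis by simp
qed

lemma lc_psi:
  assumes c: "0 \<le> c" and p: "p > 1"
  shows "(\<integral>\<^sup>+t. epow p (psi M \<phi> t) * indicator {0<..c} t \<partial>lborel) =
    (\<integral>\<^sup>+y. ennreal (p*y powr (p-1)) * indicator {0..} y * ennreal (min c (dfun M \<phi> y)) \<partial>lborel)"
proof -
  have "(\<integral>\<^sup>+t. epow p (psi M \<phi> t) * indicator {0<..c} t \<partial>lborel) =
      (\<integral>\<^sup>+t. (\<integral>\<^sup>+y. ennreal (p*y powr (p-1)) * indicator {y. 0 \<le> y \<and> ennreal y < psi M \<phi> t} y \<partial>lborel) * indicator {0<..c} t \<partial>lborel)"
    by (intro nn_integral_cong) (simp add: epow_integral[OF p])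
  also have "\<dots> = (\<integral>\<^sup>+y. ennreal (p*y powr (p-1)) * indicator {0..} y * emeasure lborel ({t\<in>space lborel. ennreal y < psi M \<phi> t} \<inter> {0<..c}) \<partial>lborel)"
    by (rule layer_cake) (auto simp: lborel.sigma_finite_measure_axioms)
  also have "\<dots> = (\<integral>\<^sup>+y. ennreal (p*y powr (p-1)) * indicator {0..} y * ennreal (min c (dfun M \<phi> y)) \<partial>lborel)"
    by (intro nn_integral_cong) (auto simp: indicator_def psi_level[OF _ c])
  finally show ?thesis .
qed

lemma lc_psi1:
  assumes c: "0 \<le> c"
  shows "(\<integral>\<^sup>+t. psi M \<phi> t * indicator {0<..c} t \<partial>lborel) =
    (\<integral>\<^sup>+y. indicator {0..} y * ennreal (min c (dfun M \<phi> y)) \<partial>lborel)"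
proof -
  have "(\<integral>\<^sup>+t. psi M \<phi> t * indicator {0<..c} t \<partial>lborel) =
      (\<integral>\<^sup>+t. (\<integral>\<^sup>+y. 1 * indicator {y. 0 \<le> y \<and> ennreal y < psi M \<phi> t} y \<partial>lborel) * indicator {0<..c} t \<partial>lborel)"
    by (intro nn_integral_cong) (simp add: id_integral)
  also have "\<dots> = (\<integral>\<^sup>+y. 1 * indicator {0..} y * emeasure lborel ({t\<in>space lborel. ennreal y < psi M \<phi> t} \<inter> {0<..c}) \<partial>lborel)"
    by (rule layer_cake) (auto simp: lborel.sigma_finite_measure_axioms)
  also have "\<dots> = (\<integral>\<^sup>+y. indicator {0..} y * ennreal (min c (dfun M \<phi> y)) \<partial>lborel)"
    by (intro nn_integral_cong) (auto simp: indicator_def psi_level[OF _ c])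
  finally show ?thesis .
qed

lemma emeasure_level_space: "emeasure M ({x\<in>space M. ennreal y < ennreal (\<phi> x)} \<inter> space M) = ennreal (min 1 (dfun M \<phi> y))"
proof -
  have "{x\<in>space M. ennreal y < ennreal (\<phi> x)} \<inter> space M = {x\<in>space M. ennreal y < ennreal (\<phi> x)}" by auto
  then show ?thesis using d_le1[of y] fin by (simp add: dfun_def finite_measure.emeasure_eq_measure)
qed

lemma R1: "(\<integral>\<^sup>+t. psi M \<phi> t * indicator {0<..1} t \<partial>lborel) = ennreal f"
proof -
  have "(\<integral>\<^sup>+t. psi M \<phi> t * indicator {0<..1} t \<partial>lborel) = (\<integral>\<^sup>+x. ennreal (\<phi> x) * indicator (space M) x \<partial>M)"
    unfolding lc_psi1[of 1, simplified] lc_M1[OF sets.top] emeasure_level_space by simp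
  also have "\<dots> = (\<integral>\<^sup>+x. ennreal (\<phi> x) \<partial>M)" by (intro nn_integral_cong) auto
  finally show ?thesis using intf by simp
qed

lemma R2: assumes p: "p > 1"
  shows "(\<integral>\<^sup>+t. epow p (psi M \<phi> t) * indicator {0<..1} t \<partial>lborel) = (\<integral>\<^sup>+x. ennreal (\<phi> x powr p) \<partial>M)"
proof -
  have "(\<integral>\<^sup>+t. epow p (psi M \<phi> t) * indicator {0<..1} t \<partial>lborel) = (\<integral>\<^sup>+x. ennreal (\<phi> x powr p) * indicator (space M) x \<partial>M)"
    unfolding lc_psi[of 1, OF _ p, simplified] lc_M[OF sets.top p] emeasure_level_space by simp
  also have "\<dots> = (\<integral>\<^sup>+x. ennreal (\<phi> x powr p) \<partial>M)" by (intro nn_integral_cong) auto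
  finally show ?thesis .
qed

lemma HL:
  assumes S[measurable]: "S \<in> sets M"
  shows "(\<integral>\<^sup>+x. ennreal (\<phi> x) * indicator S x \<partial>M) \<le> (\<integral>\<^sup>+t. psi M \<phi> t * indicator {0<..measure M S} t \<partial>lborel)"
proof -
  have "(\<integral>\<^sup>+x. ennreal (\<phi> x) * indicator S x \<partial>M) =
    (\<integral>\<^sup>+y. indicator {0..} y * emeasure M ({x\<in>space M. ennreal y < ennreal (\<phi> x)} \<inter> S) \<partial>lborel)"
    by (rule lc_M1[OF S])
  also have "\<dots> \<le> (\<integral>\<^sup>+y. indicator {0..} y * ennreal (min (measure M S) (dfun M \<phi> y)) \<partial>lborel)"
  proof (intro nn_integral_mono mult_left_mono)
    fix y
    have "emeasure M ({x\<in>space M. ennreal y < ennreal (\<phi> x)} \<inter> S) \<le> emeasure M S"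
      by (intro emeasure_mono) auto
    moreover have "emeasure M ({x\<in>space M. ennreal y < ennreal (\<phi> x)} \<inter> S) \<le> emeasure M {x\<in>space M. ennreal y < ennreal (\<phi> x)}"
      by (intro emeasure_mono) auto
    ultimately show "emeasure M ({x\<in>space M. ennreal y < ennreal (\<phi> x)} \<inter> S) \<le> ennreal (min (measure M S) (dfun M \<phi> y))"
      using fin by (simp add: dfun_def finite_measure.emeasure_eq_measure min_def)
  qed auto
  also have "\<dots> = (\<integral>\<^sup>+t. psi M \<phi> t * indicator {0<..measure M S} t \<partial>lborel)"
    by (rule lc_psi1[symmetric]) simp
  finally show ?thesis .
qed

end


context rearr
begin

definition Ue :: "real \<Rightarrow> ennreal" where
  "Ue s = (\<integral>\<^sup>+r. psi M \<phi> (s*r) * indicator {0<..1} r \<partial>lborel)"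

lemma Ue_scale:
  assumes s: "0 < s"
  shows "ennreal s * Ue s = (\<integral>\<^sup>+t. psi M \<phi> t * indicator {0<..s} t \<partial>lborel)"
proof -
  have "(\<integral>\<^sup>+t. psi M \<phi> t * indicator {0<..s} t \<partial>lborel) =
      ennreal \<bar>s\<bar> * (\<integral>\<^sup>+x. psi M \<phi> (0 + s*x) * indicator {0<..s} (0 + s*x) \<partial>lborel)"
    by (rule nn_integral_real_affine) (use s in auto)
  also have "(\<integral>\<^sup>+x. psi M \<phi> (0 + s*x) * indicator {0<..s} (0 + s*x) \<partial>lborel) = Ue s"
    unfolding Ue_def
  proof (intro nn_integral_cong)
    fix x
    have "(0 + s*x \<in> {0<..s}) \<longleftrightarrow> x \<in> {0<..1}"
      using s by (auto simp: zero_less_mult_iff mult_le_cancel_left1)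
    then show "psi M \<phi> (0 + s*x) * indicator {0<..s} (0 + s*x) = psi M \<phi> (s*x) * indicator {0<..1} x"
      by (simp add: indicator_def)
  qed
  finally show ?thesis using s by simp
qed

lemma Ue_anti:
  assumes "0 < s1" "s1 \<le> s2" shows "Ue s2 \<le> Ue s1"
  unfolding Ue_def
proof (intro nn_integral_mono)
  fix r
  show "psi M \<phi> (s2*r) * indicator {0<..1} r \<le> psi M \<phi> (s1*r) * indicator {0<..1} r"
  proof (cases "r \<in> {0<..1}")
    case True
    then have "s1 * r \<le> s2 * r" using assms by (intro mult_right_mono) auto
    then show ?thesis using True psi_anti by auto
  qed simp
qed

lemma Ue_meas[measurable]: "Ue \<in> borel_measurable borel"
  unfolding Ue_def
  by (rule sigma_finite_measure.borel_measurable_nn_integral[OF lborel.sigma_finite_measure_axioms])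
     (simp add: split_beta')

lemma psi_zero: "1 \<le> t \<Longrightarrow> psi M \<phi> t = 0"
proof -
  assume t: "1 \<le> t"
  have e: "{y. 0 \<le> y \<and> t < dfun M \<phi> y} = {}" using d_le1 t by (auto simp: not_less intro: order_trans)
  show ?thesis unfolding psi_def e by (simp add: bot_ennreal)
qed

lemma int_psi_le_f: "0 \<le> s \<Longrightarrow> (\<integral>\<^sup>+t. psi M \<phi> t * indicator {0<..s} t \<partial>lborel) \<le> ennreal f"
proof -
  assume s: "0 \<le> s"
  have "(\<integral>\<^sup>+t. psi M \<phi> t * indicator {0<..s} t \<partial>lborel) \<le> (\<integral>\<^sup>+t. psi M \<phi> t * indicator {0<..1} t \<partial>lborel)"
  proof (intro nn_integral_mono)
    fix t show "psi M \<phi> t * indicator {0<..s} t \<le> psi M \<phi> t * indicator {0<..1} t"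
      using psi_zero[of t] by (cases "t \<le> 1") (auto simp: indicator_def)
  qed
  then show ?thesis using R1 by simp
qed

lemma Ue_fin: assumes "0 < s" shows "Ue s \<le> ennreal (f / s)"
proof -
  have "ennreal s * Ue s \<le> ennreal f" using Ue_scale[OF assms] int_psi_le_f assms by simp
  moreover have "ennreal s * ennreal (f / s) = ennreal f" using assms f0 by (simp add: ennreal_mult[symmetric])
  ultimately have "ennreal s * Ue s \<le> ennreal s * ennreal (f / s)" by simp
  then show ?thesis using assms by (subst (asm) ennreal_mult_le_mult_iff) auto
qed

lemma Ue_1: "Ue 1 = ennreal f"
  using Ue_scale[of 1] R1 by simp


lemma H1:
  assumes tok: "tree_ok M T C" and K[measurable]: "K \<in> sets M" and Kk: "measure M K = k"
    and k: "0 < k" and lam: "0 \<le> lam"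
  shows "emeasure M ({x\<in>space M. ennreal lam < dyadic_max M T \<phi> x} \<inter> K)
          \<le> emeasure lborel ({s. ennreal lam < Ue s} \<inter> {0<..k})"
proof -
  let ?u = "dyadic_max M T \<phi>"
  define S where "S l = {x\<in>space M. ennreal l < ?u x}" for l
  define m where "m l = measure M (S l)" for l
  let ?\<nu> = "emeasure lborel ({s. ennreal lam < Ue s} \<inter> {0<..k})"
  have um[measurable]: "?u \<in> borel_measurable M" using dmax_measurable[OF tok] .
  have Ss[measurable]: "S l \<in> sets M" for l unfolding S_def by measurable
  have emS: "emeasure M (S l) = ennreal (m l)" for l
    unfolding m_def using fin by (simp add: finite_measure.emeasure_eq_measure)
  have step_a: "ennreal (min k (m l')) \<le> ?\<nu>" if l': "lam < l'" for l'
  proof (cases "m l' = 0")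
    case True then show ?thesis using k by simp
  next
    case False
    then have mp: "0 < m l'" unfolding m_def by (simp add: zero_less_measure_iff)
    have "ennreal l' * emeasure M (S l') \<le> (\<integral>\<^sup>+x. ennreal (\<phi> x) * indicator (S l') x \<partial>M)"
      unfolding S_def using weak_type[OF tok fin phim phi0] l' lam by simp
    also have "\<dots> \<le> (\<integral>\<^sup>+t. psi M \<phi> t * indicator {0<..m l'} t \<partial>lborel)"
      unfolding m_def by (rule HL[OF Ss])
    also have "\<dots> = ennreal (m l') * Ue (m l')" using Ue_scale[OF mp] by simp
    finally have "ennreal (m l') * ennreal l' \<le> ennreal (m l') * Ue (m l')"
      using emS by (simp add: mult.commute)
    then have le: "ennreal l' \<le> Ue (m l')" using mp by (subst (asm) ennreal_mult_le_mult_iff) auto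
    have sub: "{0<..min k (m l')} \<subseteq> {s. ennreal lam < Ue s} \<inter> {0<..k}"
    proof
      fix s assume s: "s \<in> {0<..min k (m l')}"
      have "ennreal lam < ennreal l'" using l' lam by (intro ennreal_lessI) auto
      also have "\<dots> \<le> Ue (m l')" by (rule le)
      also have "\<dots> \<le> Ue s" using s by (intro Ue_anti) auto
      finally show "s \<in> {s. ennreal lam < Ue s} \<inter> {0<..k}" using s by auto
    qed
    have "ennreal (min k (m l')) = emeasure lborel {0<..min k (m l')}" using k mp by simp
    also have "\<dots> \<le> ?\<nu>" using sub by (intro emeasure_mono) auto
    finally show ?thesis .
  qed
  have step_b: "emeasure M (S lam \<inter> K) \<le> ennreal (min k (m lam))"
  proof -
    have "emeasure M (S lam \<inter> K) \<le> emeasure M K" by (intro emeasure_mono) auto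
    moreover have "emeasure M (S lam \<inter> K) \<le> emeasure M (S lam)" by (intro emeasure_mono) auto
    ultimately show ?thesis using emS fin Kk by (simp add: finite_measure.emeasure_eq_measure min_def)
  qed
  have step_c: "ennreal (min k (m lam)) \<le> ?\<nu>"
  proof (rule ccontr)
    assume "\<not> ennreal (min k (m lam)) \<le> ?\<nu>"
    then have lt: "?\<nu> < ennreal (min k (m lam))" by simp
    then obtain v where v: "?\<nu> = ennreal v" "0 \<le> v" by (cases ?\<nu>) auto
    then have vl: "v < min k (m lam)" using lt by (simp add: ennreal_less_iff)
    then have "v < measure M {x\<in>space M. ennreal lam < ?u x}" unfolding m_def S_def by simp
    from rc_measure[OF fin um this lam] obtain l' where l': "lam < l'" "v < m l'"
      unfolding m_def S_def by blast
    have "ennreal (min k (m l')) \<le> ennreal v" using step_a[OF l'(1)] v by simp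
    then have "min k (m l') \<le> v" using v by (simp add: ennreal_le_iff)
    then show False using l' vl by linarith
  qed
  show ?thesis using step_b step_c unfolding S_def by (rule order_trans)
qed

end


locale hardy = rearr +
  fixes p k :: real
  assumes p: "p > 1" and k0: "0 < k" and k1: "k < 1"
begin

definition nu :: "real \<Rightarrow> ennreal" where
  "nu l = emeasure lborel ({s. ennreal l < Ue s} \<inter> {0<..k})"

definition c0 :: real where "c0 = enn2real (Ue k)"

lemma Ue_fin': "0 < s \<Longrightarrow> Ue s < \<infinity>"
  using Ue_fin[of s] by (simp add: le_less_trans)

lemma Ue_k: "Ue k = ennreal c0" "0 \<le> c0"
  using Ue_fin'[OF k0] unfolding c0_def by (auto simp: less_top)

lemma c0_ge_f: "f \<le> c0"
proof -
  have "ennreal f \<le> ennreal c0" using Ue_anti[OF k0, of 1] k1 Ue_1 Ue_k by simp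
  then show ?thesis using Ue_k by (simp add: ennreal_le_iff)
qed

lemma Ue_ge_c0: "s \<in> {0<..k} \<Longrightarrow> ennreal c0 \<le> Ue s"
  using Ue_anti[of s k] Ue_k by auto

lemma nu_meas[measurable]: "nu \<in> borel_measurable borel"
proof -
  have m1: "(\<lambda>l. \<integral>\<^sup>+s. indicator {(l, s). ennreal l < Ue s \<and> s \<in> {0<..k}} (l, s) \<partial>lborel) \<in> borel_measurable borel"
    by (rule sigma_finite_measure.borel_measurable_nn_integral[OF lborel.sigma_finite_measure_axioms])
       (simp add: split_beta' pred_def[symmetric])
  have eq1: "nu l = (\<integral>\<^sup>+s. indicator {(l, s). ennreal l < Ue s \<and> s \<in> {0<..k}} (l, s) \<partial>lborel)" for l
  proof -
    have "(\<integral>\<^sup>+s. indicator {(l, s). ennreal l < Ue s \<and> s \<in> {0<..k}} (l, s) \<partial>lborel)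
        = (\<integral>\<^sup>+s. indicator ({s. ennreal l < Ue s} \<inter> {0<..k}) s \<partial>lborel)"
      by (intro nn_integral_cong) (auto simp: indicator_def)
    also have "\<dots> = nu l" unfolding nu_def by (rule nn_integral_indicator) simp
    finally show ?thesis by simp
  qed
  have eq: "nu = (\<lambda>l. \<integral>\<^sup>+s. indicator {(l, s). ennreal l < Ue s \<and> s \<in> {0<..k}} (l, s) \<partial>lborel)"
    by (rule ext) (rule eq1)
  show ?thesis unfolding eq by (rule m1)
qed

lemma nu_low: "0 \<le> y \<Longrightarrow> y < c0 \<Longrightarrow> nu y = ennreal k"
proof -
  assume y: "0 \<le> y" "y < c0"
  have "{s. ennreal y < Ue s} \<inter> {0<..k} = {0<..k}"
  proof -
    have "ennreal y < ennreal c0" using y by (intro ennreal_lessI) auto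
    then show ?thesis using Ue_ge_c0 by (auto intro: less_le_trans)
  qed
  then show ?thesis unfolding nu_def using k0 by simp
qed

definition alpha :: "real \<Rightarrow> ennreal" where
  "alpha y = (\<integral>\<^sup>+s. psi M \<phi> s * indicator ({s. ennreal y < Ue s} \<inter> {0<..k}) s \<partial>lborel)"

lemma wt1:
  assumes y: "0 < y"
  shows "ennreal y * nu y \<le> alpha y"
proof (cases "{s. ennreal y < Ue s} \<inter> {0<..k} = {}")
  case True then show ?thesis unfolding nu_def by simp
next
  case False
  define A where "A = {s. ennreal y < Ue s} \<inter> {0<..k}"
  have Ane: "A \<noteq> {}" using False unfolding A_def by simp
  have bdd: "bdd_above A" unfolding A_def by (intro bdd_aboveI[of _ k]) auto
  define \<sigma> where "\<sigma> = Sup A"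
  have Asub: "A \<subseteq> {0<..\<sigma>}"
  proof
    fix s assume s: "s \<in> A"
    have "s \<le> \<sigma>" unfolding \<sigma>_def by (rule cSup_upper[OF s bdd])
    moreover have "0 < s" using s unfolding A_def by simp
    ultimately show "s \<in> {0<..\<sigma>}" by simp
  qed
  have sig0: "0 \<le> \<sigma>" using Ane Asub by fastforce
  have Ameas: "A \<in> sets lborel" unfolding A_def by measurable
  have nuA: "nu y \<le> ennreal \<sigma>"
  proof -
    have "nu y = emeasure lborel A" unfolding nu_def A_def ..
    also have "\<dots> \<le> emeasure lborel {0<..\<sigma>}" using Asub by (intro emeasure_mono) auto
    finally show ?thesis using sig0 by simp
  qed
  have afin: "alpha y \<le> ennreal f"
  proof -
    have "alpha y \<le> (\<integral>\<^sup>+s. psi M \<phi> s * indicator {0<..k} s \<partial>lborel)"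
      unfolding alpha_def by (intro nn_integral_mono) (auto simp: indicator_def)
    also have "\<dots> \<le> ennreal f" using int_psi_le_f k0 by simp
    finally show ?thesis .
  qed
  then have "alpha y \<noteq> \<infinity>" by (auto simp: top_unique)
  then obtain a where a: "alpha y = ennreal a" "0 \<le> a" by (cases "alpha y") auto
  have each: "s * y \<le> a" if s: "s \<in> A" for s
  proof -
    have sub: "{0<..s} \<subseteq> A"
    proof
      fix r assume r: "r \<in> {0<..s}"
      have "ennreal y < Ue s" using s unfolding A_def by simp
      also have "Ue s \<le> Ue r" using r by (intro Ue_anti) auto
      finally show "r \<in> A" using r s unfolding A_def by auto
    qed
    have sp: "0 < s" using s unfolding A_def by simp
    have "ennreal (s * y) = ennreal s * ennreal y" using sp y by (simp add: ennreal_mult)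
    also have "\<dots> \<le> ennreal s * Ue s" using s unfolding A_def by (intro mult_left_mono) auto
    also have "\<dots> = (\<integral>\<^sup>+t. psi M \<phi> t * indicator {0<..s} t \<partial>lborel)" by (rule Ue_scale[OF sp])
    also have "\<dots> \<le> alpha y" unfolding alpha_def A_def[symmetric]
      using sub by (intro nn_integral_mono) (auto simp: indicator_def)
    finally show ?thesis using a by (simp add: ennreal_le_iff)
  qed
  have "\<sigma> \<le> a / y" unfolding \<sigma>_def
    using Ane each y by (intro cSup_least) (auto simp: field_simps)
  then have ys: "y * \<sigma> \<le> a" using y by (simp add: field_simps)
  have "ennreal y * nu y \<le> ennreal y * ennreal \<sigma>" using nuA by (intro mult_left_mono) auto
  also have "\<dots> = ennreal (y * \<sigma>)" using y sig0 by (simp add: ennreal_mult)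
  also have "\<dots> \<le> alpha y" using ys a by simp
  finally show ?thesis .
qed


definition Ur :: "real \<Rightarrow> real" where "Ur s = enn2real (Ue s)"

lemma Ue_Ur: "0 < s \<Longrightarrow> Ue s = ennreal (Ur s)" "0 \<le> Ur s"
  unfolding Ur_def using Ue_fin' by (auto simp: less_top)

lemma Ur_ge_c0: "s \<in> {0<..k} \<Longrightarrow> c0 \<le> Ur s"
  using Ue_ge_c0[of s] Ue_Ur[of s] by (simp add: ennreal_le_iff)

lemma int_psi_k: "(\<integral>\<^sup>+s. psi M \<phi> s * indicator {0<..k} s \<partial>lborel) = ennreal (k * c0)"
  using Ue_scale[OF k0] Ue_k k0 by (simp add: ennreal_mult)

definition PN :: "real \<Rightarrow> ennreal" where
  "PN N = (\<integral>\<^sup>+s. psi M \<phi> s * ennreal (min (Ur s) N powr (p - 1)) * indicator {0<..k} s \<partial>lborel)"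

lemma Ur_meas[measurable]: "Ur \<in> borel_measurable borel"
  unfolding Ur_def by measurable

lemma inner_int:
  assumes c: "0 < c0" and b: "c0 \<le> b"
  shows "(\<integral>\<^sup>+y. ennreal (p * y powr (p - 1 - 1)) * indicator {c0..<b} y \<partial>lborel)
       = ennreal (p / (p - 1)) * ennreal (b powr (p - 1) - c0 powr (p - 1))"
proof -
  have "(\<integral>\<^sup>+y. ennreal (p * y powr (p - 1 - 1)) * indicator {c0..<b} y \<partial>lborel)
      = (\<integral>\<^sup>+y. ennreal (p / (p - 1)) * (ennreal ((p - 1) * y powr (p - 1 - 1)) * indicator {c0..<b} y) \<partial>lborel)"
  proof (intro nn_integral_cong)
    fix y
    have e: "p * y powr (p - 1 - 1) = (p / (p - 1)) * ((p - 1) * y powr (p - 1 - 1))" using p by simp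
    have "ennreal (p * y powr (p - 1 - 1)) = ennreal (p / (p - 1)) * ennreal ((p - 1) * y powr (p - 1 - 1))"
      unfolding e by (rule ennreal_mult) (use p in auto)
    then show "ennreal (p * y powr (p - 1 - 1)) * indicator {c0..<b} y
      = ennreal (p / (p - 1)) * (ennreal ((p - 1) * y powr (p - 1 - 1)) * indicator {c0..<b} y)"
      by (simp only: mult.assoc)
  qed
  also have "\<dots> = ennreal (p / (p - 1)) * (\<integral>\<^sup>+y. ennreal ((p - 1) * y powr (p - 1 - 1)) * indicator {c0..<b} y \<partial>lborel)"
    by (rule nn_integral_cmult) measurable
  also have "(\<integral>\<^sup>+y. ennreal ((p - 1) * y powr (p - 1 - 1)) * indicator {c0..<b} y \<partial>lborel) = ennreal (b powr (p - 1) - c0 powr (p - 1))"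
    by (rule powr_integral_Ico) (use p c b in auto)
  finally show ?thesis .
qed

lemma T1:
  assumes c: "0 < c0" and N: "c0 \<le> N"
  shows "(\<integral>\<^sup>+y. ennreal (p * y powr (p - 1)) * indicator {c0..<N} y * nu y \<partial>lborel)
          + ennreal (p / (p - 1) * c0 powr (p - 1) * (k * c0)) \<le> ennreal (p / (p - 1)) * PN N"
proof -
  let ?w2 = "\<lambda>y. ennreal (p * y powr (p - 1 - 1))"
  let ?ind = "\<lambda>y s. indicator ({s. ennreal y < Ue s} \<inter> {0<..k}) s :: ennreal"
  have step1: "(\<integral>\<^sup>+y. ennreal (p * y powr (p - 1)) * indicator {c0..<N} y * nu y \<partial>lborel)
      \<le> (\<integral>\<^sup>+y. ?w2 y * indicator {c0..<N} y * alpha y \<partial>lborel)"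
  proof (intro nn_integral_mono)
    fix y
    show "ennreal (p * y powr (p - 1)) * indicator {c0..<N} y * nu y \<le> ?w2 y * indicator {c0..<N} y * alpha y"
    proof (cases "y \<in> {c0..<N}")
      case True
      then have y: "0 < y" using c by auto
      have e: "p * y powr (p - 1) = p * y powr (p - 1 - 1) * y" using powr_shift1[OF y, of "p - 1"] by simp
      have "ennreal (p * y powr (p - 1)) = ?w2 y * ennreal y"
        unfolding e by (rule ennreal_mult) (use p y in auto)
      then have "ennreal (p * y powr (p - 1)) * nu y = ?w2 y * (ennreal y * nu y)"
        by (simp only: mult.assoc)
      also have "\<dots> \<le> ?w2 y * alpha y" using wt1[OF y] by (intro mult_left_mono) auto
      finally show ?thesis using True by simp
    qed simp
  qed
  also have "\<dots> = (\<integral>\<^sup>+y. (\<integral>\<^sup>+s. ?w2 y * indicator {c0..<N} y * (psi M \<phi> s * ?ind y s) \<partial>lborel) \<partial>lborel)"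
    unfolding alpha_def by (intro nn_integral_cong) (rule nn_integral_cmult[symmetric], measurable)
  also have "\<dots> = (\<integral>\<^sup>+s. (\<integral>\<^sup>+y. ?w2 y * indicator {c0..<N} y * (psi M \<phi> s * ?ind y s) \<partial>lborel) \<partial>lborel)"
  proof (rule pair_sigma_finite.Fubini')
    show "pair_sigma_finite lborel lborel"
      by (simp add: pair_sigma_finite_def lborel.sigma_finite_measure_axioms)
    have "Measurable.pred (lborel \<Otimes>\<^sub>M lborel) (\<lambda>(s, y). ennreal y < Ue s \<and> s \<in> {0<..k})" by measurable
    then show "(\<lambda>(s, y). ?w2 y * indicator {c0..<N} y * (psi M \<phi> s * ?ind y s)) \<in> borel_measurable (lborel \<Otimes>\<^sub>M lborel)"
      by (simp add: split_beta' indicator_def pred_def) measurable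
  qed
  also have "\<dots> = (\<integral>\<^sup>+s. psi M \<phi> s * indicator {0<..k} s * (ennreal (p / (p - 1)) * ennreal (min (Ur s) N powr (p - 1) - c0 powr (p - 1))) \<partial>lborel)"
  proof (intro nn_integral_cong)
    fix s
    show "(\<integral>\<^sup>+y. ?w2 y * indicator {c0..<N} y * (psi M \<phi> s * ?ind y s) \<partial>lborel)
       = psi M \<phi> s * indicator {0<..k} s * (ennreal (p / (p - 1)) * ennreal (min (Ur s) N powr (p - 1) - c0 powr (p - 1)))"
    proof (cases "s \<in> {0<..k}")
      case False
      then have "\<And>y. ?ind y s = 0" by (simp add: indicator_def)
      then show ?thesis using False by simp
    next
      case True
      have mge: "c0 \<le> min (Ur s) N" using Ur_ge_c0[OF True] N by simp
      have "(\<integral>\<^sup>+y. ?w2 y * indicator {c0..<N} y * (psi M \<phi> s * ?ind y s) \<partial>lborel)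
          = (\<integral>\<^sup>+y. psi M \<phi> s * (?w2 y * indicator {c0..<min (Ur s) N} y) \<partial>lborel)"
      proof (intro nn_integral_cong)
        fix y
        have "(y \<in> {c0..<N} \<and> ennreal y < Ue s) \<longleftrightarrow> y \<in> {c0..<min (Ur s) N}"
        proof (cases "c0 \<le> y")
          case True
          then have "0 \<le> y" using c by simp
          then show ?thesis using Ue_Ur[of s] \<open>s \<in> {0<..k}\<close> True by (auto simp: ennreal_less_iff)
        qed simp
        then show "?w2 y * indicator {c0..<N} y * (psi M \<phi> s * ?ind y s) = psi M \<phi> s * (?w2 y * indicator {c0..<min (Ur s) N} y)"
          using True by (auto simp: indicator_def mult_ac)
      qed
      also have "\<dots> = psi M \<phi> s * (\<integral>\<^sup>+y. ?w2 y * indicator {c0..<min (Ur s) N} y \<partial>lborel)"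
        by (rule nn_integral_cmult) measurable
      also have "\<dots> = psi M \<phi> s * (ennreal (p / (p - 1)) * ennreal (min (Ur s) N powr (p - 1) - c0 powr (p - 1)))"
        using inner_int[OF c mge] by simp
      finally show ?thesis using True by simp
    qed
  qed
  finally have A: "(\<integral>\<^sup>+y. ennreal (p * y powr (p - 1)) * indicator {c0..<N} y * nu y \<partial>lborel)
      \<le> (\<integral>\<^sup>+s. psi M \<phi> s * indicator {0<..k} s * (ennreal (p / (p - 1)) * ennreal (min (Ur s) N powr (p - 1) - c0 powr (p - 1))) \<partial>lborel)" .
  have Bq: "ennreal (p / (p - 1) * c0 powr (p - 1) * (k * c0))
      = (\<integral>\<^sup>+s. psi M \<phi> s * indicator {0<..k} s * ennreal (p / (p - 1) * c0 powr (p - 1)) \<partial>lborel)"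
  proof -
    have "(\<integral>\<^sup>+s. psi M \<phi> s * indicator {0<..k} s * ennreal (p / (p - 1) * c0 powr (p - 1)) \<partial>lborel)
        = (\<integral>\<^sup>+s. psi M \<phi> s * indicator {0<..k} s \<partial>lborel) * ennreal (p / (p - 1) * c0 powr (p - 1))"
      by (rule nn_integral_multc) measurable
    also have "\<dots> = ennreal (k * c0) * ennreal (p / (p - 1) * c0 powr (p - 1))" using int_psi_k by simp
    also have "\<dots> = ennreal (k * c0 * (p / (p - 1) * c0 powr (p - 1)))"
      by (rule ennreal_mult[symmetric]) (use p k0 c in auto)
    also have "k * c0 * (p / (p - 1) * c0 powr (p - 1)) = p / (p - 1) * c0 powr (p - 1) * (k * c0)"
      by (simp only: mult.commute)
    finally show ?thesis by simp
  qed
  have "(\<integral>\<^sup>+s. psi M \<phi> s * indicator {0<..k} s * (ennreal (p / (p - 1)) * ennreal (min (Ur s) N powr (p - 1) - c0 powr (p - 1))) \<partial>lborel)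
      + (\<integral>\<^sup>+s. psi M \<phi> s * indicator {0<..k} s * ennreal (p / (p - 1) * c0 powr (p - 1)) \<partial>lborel)
      = (\<integral>\<^sup>+s. psi M \<phi> s * indicator {0<..k} s * (ennreal (p / (p - 1)) * ennreal (min (Ur s) N powr (p - 1) - c0 powr (p - 1)))
          + psi M \<phi> s * indicator {0<..k} s * ennreal (p / (p - 1) * c0 powr (p - 1)) \<partial>lborel)"
    by (rule nn_integral_add[symmetric]) measurable
  also have "\<dots> = (\<integral>\<^sup>+s. ennreal (p / (p - 1)) * (psi M \<phi> s * ennreal (min (Ur s) N powr (p - 1)) * indicator {0<..k} s) \<partial>lborel)"
  proof (intro nn_integral_cong)
    fix s
    show "psi M \<phi> s * indicator {0<..k} s * (ennreal (p / (p - 1)) * ennreal (min (Ur s) N powr (p - 1) - c0 powr (p - 1)))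
          + psi M \<phi> s * indicator {0<..k} s * ennreal (p / (p - 1) * c0 powr (p - 1))
        = ennreal (p / (p - 1)) * (psi M \<phi> s * ennreal (min (Ur s) N powr (p - 1)) * indicator {0<..k} s)"
    proof (cases "s \<in> {0<..k}")
      case False then show ?thesis by simp
    next
      case True
      have mge: "c0 powr (p - 1) \<le> min (Ur s) N powr (p - 1)"
        using Ur_ge_c0[OF True] N c p by (intro powr_mono2) auto
      have "ennreal (p / (p - 1)) * ennreal (min (Ur s) N powr (p - 1) - c0 powr (p - 1)) + ennreal (p / (p - 1) * c0 powr (p - 1))
          = ennreal (p / (p - 1) * (min (Ur s) N powr (p - 1) - c0 powr (p - 1))) + ennreal (p / (p - 1) * c0 powr (p - 1))"
        by (subst ennreal_mult[symmetric]) (use p mge in auto)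
      also have "\<dots> = ennreal (p / (p - 1) * (min (Ur s) N powr (p - 1) - c0 powr (p - 1)) + p / (p - 1) * c0 powr (p - 1))"
        by (rule ennreal_plus[symmetric]) (use p mge in auto)
      also have "p / (p - 1) * (min (Ur s) N powr (p - 1) - c0 powr (p - 1)) + p / (p - 1) * c0 powr (p - 1)
          = p / (p - 1) * min (Ur s) N powr (p - 1)" by (simp add: algebra_simps)
      also have "ennreal (p / (p - 1) * min (Ur s) N powr (p - 1)) = ennreal (p / (p - 1)) * ennreal (min (Ur s) N powr (p - 1))"
        by (rule ennreal_mult) (use p in auto)
      finally have e: "ennreal (p / (p - 1)) * ennreal (min (Ur s) N powr (p - 1) - c0 powr (p - 1)) + ennreal (p / (p - 1) * c0 powr (p - 1))
          = ennreal (p / (p - 1)) * ennreal (min (Ur s) N powr (p - 1))" .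
      have "psi M \<phi> s * indicator {0<..k} s * (ennreal (p / (p - 1)) * ennreal (min (Ur s) N powr (p - 1) - c0 powr (p - 1)))
          + psi M \<phi> s * indicator {0<..k} s * ennreal (p / (p - 1) * c0 powr (p - 1))
        = psi M \<phi> s * (ennreal (p / (p - 1)) * ennreal (min (Ur s) N powr (p - 1) - c0 powr (p - 1))
          + ennreal (p / (p - 1) * c0 powr (p - 1)))"
        using True by (simp add: distrib_left)
      also have "\<dots> = psi M \<phi> s * (ennreal (p / (p - 1)) * ennreal (min (Ur s) N powr (p - 1)))"
        by (simp only: e)
      also have "\<dots> = ennreal (p / (p - 1)) * (psi M \<phi> s * ennreal (min (Ur s) N powr (p - 1)) * indicator {0<..k} s)"
        using True by (simp add: mult.left_commute)
      finally show ?thesis .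
    qed
  qed
  also have "\<dots> = ennreal (p / (p - 1)) * PN N" unfolding PN_def
    by (rule nn_integral_cmult) measurable
  finally have Cq: "(\<integral>\<^sup>+s. psi M \<phi> s * indicator {0<..k} s * (ennreal (p / (p - 1)) * ennreal (min (Ur s) N powr (p - 1) - c0 powr (p - 1))) \<partial>lborel)
      + ennreal (p / (p - 1) * c0 powr (p - 1) * (k * c0)) = ennreal (p / (p - 1)) * PN N"
    using Bq by simp
  have "(\<integral>\<^sup>+y. ennreal (p * y powr (p - 1)) * indicator {c0..<N} y * nu y \<partial>lborel)
          + ennreal (p / (p - 1) * c0 powr (p - 1) * (k * c0))
     \<le> (\<integral>\<^sup>+s. psi M \<phi> s * indicator {0<..k} s * (ennreal (p / (p - 1)) * ennreal (min (Ur s) N powr (p - 1) - c0 powr (p - 1))) \<partial>lborel)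
      + ennreal (p / (p - 1) * c0 powr (p - 1) * (k * c0))" using A by (rule add_right_mono)
  then show ?thesis unfolding Cq .
qed


definition LamN :: "real \<Rightarrow> ennreal" where
  "LamN N = (\<integral>\<^sup>+s. epow p (min (Ue s) (ennreal N)) * indicator {0<..k} s \<partial>lborel)"

lemma LamN_lc:
  assumes N: "0 \<le> N"
  shows "LamN N = (\<integral>\<^sup>+y. ennreal (p * y powr (p - 1)) * indicator {0..<N} y * nu y \<partial>lborel)"
proof -
  have "LamN N = (\<integral>\<^sup>+s. (\<integral>\<^sup>+y. ennreal (p * y powr (p - 1)) * indicator {y. 0 \<le> y \<and> ennreal y < min (Ue s) (ennreal N)} y \<partial>lborel) * indicator {0<..k} s \<partial>lborel)"
    unfolding LamN_def by (intro nn_integral_cong) (simp only: epow_integral[OF p])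
  also have "\<dots> = (\<integral>\<^sup>+y. ennreal (p * y powr (p - 1)) * indicator {0..} y * emeasure lborel ({s\<in>space lborel. ennreal y < min (Ue s) (ennreal N)} \<inter> {0<..k}) \<partial>lborel)"
    by (rule layer_cake) (auto simp: lborel.sigma_finite_measure_axioms)
  also have "\<dots> = (\<integral>\<^sup>+y. ennreal (p * y powr (p - 1)) * indicator {0..<N} y * nu y \<partial>lborel)"
  proof (intro nn_integral_cong)
    fix y
    show "ennreal (p * y powr (p - 1)) * indicator {0..} y * emeasure lborel ({s\<in>space lborel. ennreal y < min (Ue s) (ennreal N)} \<inter> {0<..k})
        = ennreal (p * y powr (p - 1)) * indicator {0..<N} y * nu y"
    proof (cases "0 \<le> y")
      case True
      show ?thesis
      proof (cases "y < N")
        case True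
        then have e: "{s\<in>space lborel. ennreal y < min (Ue s) (ennreal N)} = {s. ennreal y < Ue s}"
          using \<open>0 \<le> y\<close> by (auto simp: ennreal_less_iff)
        show ?thesis unfolding e using True \<open>0 \<le> y\<close> unfolding nu_def by simp
      next
        case False
        then have "\<not> ennreal y < ennreal N" using ennreal_less_iff[OF \<open>0 \<le> y\<close>] by simp
        then have e: "{s\<in>space lborel. ennreal y < min (Ue s) (ennreal N)} = {}" by auto
        show ?thesis unfolding e using False by simp
      qed
    qed simp
  qed
  finally show ?thesis .
qed

lemma T0: "(\<integral>\<^sup>+y. ennreal (p * y powr (p - 1)) * indicator {0..<c0} y * nu y \<partial>lborel) = ennreal (k * c0 powr p)"
proof -
  have "(\<integral>\<^sup>+y. ennreal (p * y powr (p - 1)) * indicator {0..<c0} y * nu y \<partial>lborel)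
      = (\<integral>\<^sup>+y. ennreal (p * y powr (p - 1)) * indicator {0..<c0} y * ennreal k \<partial>lborel)"
    by (intro nn_integral_cong) (auto simp: indicator_def nu_low)
  also have "\<dots> = (\<integral>\<^sup>+y. ennreal (p * y powr (p - 1)) * indicator {0..<c0} y \<partial>lborel) * ennreal k"
    by (rule nn_integral_multc) measurable
  also have "(\<integral>\<^sup>+y. ennreal (p * y powr (p - 1)) * indicator {0..<c0} y \<partial>lborel) = ennreal (c0 powr p - 0 powr p)"
    by (rule powr_integral_Ico) (use p Ue_k in auto)
  finally show ?thesis using k0 Ue_k by (simp add: ennreal_mult[symmetric] mult.commute)
qed

lemma split_c0:
  assumes N: "c0 \<le> N"
  shows "(\<integral>\<^sup>+y. ennreal (p * y powr (p - 1)) * indicator {0..<N} y * nu y \<partial>lborel)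
    = (\<integral>\<^sup>+y. ennreal (p * y powr (p - 1)) * indicator {0..<c0} y * nu y \<partial>lborel)
    + (\<integral>\<^sup>+y. ennreal (p * y powr (p - 1)) * indicator {c0..<N} y * nu y \<partial>lborel)"
proof -
  have "(\<integral>\<^sup>+y. ennreal (p * y powr (p - 1)) * indicator {0..<N} y * nu y \<partial>lborel)
     = (\<integral>\<^sup>+y. ennreal (p * y powr (p - 1)) * indicator {0..<c0} y * nu y + ennreal (p * y powr (p - 1)) * indicator {c0..<N} y * nu y \<partial>lborel)"
  proof (intro nn_integral_cong)
    fix y
    show "ennreal (p * y powr (p - 1)) * indicator {0..<N} y * nu y
      = ennreal (p * y powr (p - 1)) * indicator {0..<c0} y * nu y + ennreal (p * y powr (p - 1)) * indicator {c0..<N} y * nu y"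
      using N Ue_k by (auto simp: indicator_def)
  qed
  also have "\<dots> = (\<integral>\<^sup>+y. ennreal (p * y powr (p - 1)) * indicator {0..<c0} y * nu y \<partial>lborel)
    + (\<integral>\<^sup>+y. ennreal (p * y powr (p - 1)) * indicator {c0..<N} y * nu y \<partial>lborel)"
    by (rule nn_integral_add) measurable
  finally show ?thesis .
qed

lemma c0_pos: "0 < f \<Longrightarrow> 0 < c0"
  using c0_ge_f by simp

lemma main_ineq:
  assumes fp: "0 < f" and N: "c0 \<le> N"
  shows "LamN N + ennreal (p / (p - 1) * c0 powr (p - 1) * (k * c0)) \<le> ennreal (k * c0 powr p) + ennreal (p / (p - 1)) * PN N"
proof -
  have N0: "0 \<le> N" using N Ue_k by simp
  have "LamN N + ennreal (p / (p - 1) * c0 powr (p - 1) * (k * c0))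
     = ennreal (k * c0 powr p) + ((\<integral>\<^sup>+y. ennreal (p * y powr (p - 1)) * indicator {c0..<N} y * nu y \<partial>lborel)
        + ennreal (p / (p - 1) * c0 powr (p - 1) * (k * c0)))"
    unfolding LamN_lc[OF N0] split_c0[OF N] T0 by (simp add: add.assoc)
  also have "\<dots> \<le> ennreal (k * c0 powr p) + ennreal (p / (p - 1)) * PN N"
    using T1[OF c0_pos[OF fp] N] by (rule add_left_mono)
  finally show ?thesis .
qed

end


lemma final_alg:
  fixes p L G G1 K0 :: real
  assumes p: "p > 1" and L0: "0 \<le> L" and G1: "0 < G1" "G1 \<le> G" and K0: "0 \<le> K0" "K0 \<le> G"
    and ineq: "(p - 1) * L + K0 \<le> p * G1 powr (1/p) * L powr ((p - 1)/p)"
  shows "L \<le> G * omega_p p (K0 / G) powr p"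
proof (cases "L = 0")
  case True
  have "0 < G" using G1 by simp
  then show ?thesis using True by simp
next
  case False
  then have Lp: "0 < L" using L0 by simp
  have Gp: "0 < G" using G1 by simp
  define z where "z = (L / G) powr (1/p)"
  have zp: "0 < z" unfolding z_def using Lp Gp by simp
  have zpp: "z powr p = L / G" unfolding z_def using Lp Gp p by (simp add: powr_powr)
  have zp1: "z powr (p - 1) = (L / G) powr ((p - 1)/p)" unfolding z_def using Lp Gp p
    by (simp add: powr_powr)
  have Lz: "L = G * z powr p" using zpp Gp by simp
  have c1: "p * G1 powr (1/p) * L powr ((p - 1)/p) \<le> p * G powr (1/p) * L powr ((p - 1)/p)"
    using G1 p Lp by (intro mult_right_mono mult_left_mono powr_mono2) auto
  have c2: "L powr ((p - 1)/p) = G powr ((p - 1)/p) * (L / G) powr ((p - 1)/p)"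
  proof -
    have "L = G * (L / G)" using Gp by simp
    then have "L powr ((p - 1)/p) = (G * (L / G)) powr ((p - 1)/p)" by simp
    also have "\<dots> = G powr ((p - 1)/p) * (L / G) powr ((p - 1)/p)"
      using powr_mult[of G "L/G" "(p-1)/p"] Gp Lp by simp
    finally show ?thesis .
  qed
  have c3: "p * G powr (1/p) * (G powr ((p - 1)/p) * (L / G) powr ((p - 1)/p)) = p * G * z powr (p - 1)"
  proof -
    have "G powr (1/p) * G powr ((p - 1)/p) = G powr (1/p + (p - 1)/p)" by (simp add: powr_add)
    also have "1/p + (p - 1)/p = 1" using p by (simp add: field_simps)
    finally have "G powr (1/p) * G powr ((p - 1)/p) = G" using Gp by simp
    then show ?thesis using zp1 by (simp add: mult_ac)
  qed
  have "(p - 1) * L + K0 \<le> p * G * z powr (p - 1)" using ineq c1 c2 c3 by simp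
  then have "(p - 1) * (G * z powr p) + K0 \<le> p * G * z powr (p - 1)" unfolding Lz .
  then have "K0 \<le> G * (p * z powr (p - 1) - (p - 1) * z powr p)" by (simp add: algebra_simps)
  then have "K0 / G \<le> H_p p z" unfolding H_p_def using Gp by (simp add: field_simps)
  then have "z \<le> omega_p p (K0 / G)"
    using omega_p_ge[OF p _ _ _] K0 Gp zp by simp
  then have "z powr p \<le> omega_p p (K0 / G) powr p" using zp p by (intro powr_mono2) auto
  then show ?thesis using Lz Gp by simp
qed


lemma fin_le_ennreal:
  fixes X :: ennreal
  assumes "X \<le> ennreal r" shows "X = ennreal (enn2real X)"
proof -
  have "X < top" using assms by (rule le_less_trans) simp
  then show ?thesis using ennreal_enn2real[of X] by simp
qed

locale hardyF = hardy +
  fixes F :: real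
  assumes intF: "(\<integral>\<^sup>+x. ennreal (\<phi> x powr p) \<partial>M) = ennreal F" and fpos: "0 < f"
begin

definition psr :: "real \<Rightarrow> real" where "psr s = enn2real (psi M \<phi> s)"

lemma psi_real: "0 < s \<Longrightarrow> psi M \<phi> s = ennreal (psr s)" "0 \<le> psr s"
proof -
  assume s: "0 < s"
  have "psi M \<phi> s < \<infinity>" using psi_fin[OF s] by (simp add: le_less_trans)
  then show "psi M \<phi> s = ennreal (psr s)" unfolding psr_def by (simp add: less_top)
qed (simp add: psr_def)

lemma psr_meas[measurable]: "psr \<in> borel_measurable borel"
  unfolding psr_def by measurable

lemma epow_ennreal: "0 \<le> r \<Longrightarrow> epow p (ennreal r) = ennreal (r powr p)"
  unfolding epow_def by simp

definition G1e :: ennreal where "G1e = (\<integral>\<^sup>+s. epow p (psi M \<phi> s) * indicator {0<..k} s \<partial>lborel)"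
definition G2e :: ennreal where "G2e = (\<integral>\<^sup>+s. epow p (psi M \<phi> s) * indicator {k<..1} s \<partial>lborel)"

lemma G12: "G1e + G2e = ennreal F"
proof -
  have "G1e + G2e = (\<integral>\<^sup>+s. epow p (psi M \<phi> s) * indicator {0<..k} s + epow p (psi M \<phi> s) * indicator {k<..1} s \<partial>lborel)"
    unfolding G1e_def G2e_def by (rule nn_integral_add[symmetric]) (auto simp: epow_def)
  also have "\<dots> = (\<integral>\<^sup>+s. epow p (psi M \<phi> s) * indicator {0<..1} s \<partial>lborel)"
    by (intro nn_integral_cong) (use k0 k1 in \<open>auto simp: indicator_def\<close>)
  also have "\<dots> = ennreal F" using R2[OF p] intF by simp
  finally show ?thesis .
qed

lemma G1_fin: "G1e = ennreal (enn2real G1e)" "G2e = ennreal (enn2real G2e)"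
proof -
  have "G1e \<le> ennreal F" "G2e \<le> ennreal F" using G12 by (metis le_iff_add add.commute)+
  then show "G1e = ennreal (enn2real G1e)" "G2e = ennreal (enn2real G2e)"
    by (auto intro: fin_le_ennreal)
qed

lemma LamN_fin: "0 \<le> N \<Longrightarrow> LamN N \<le> ennreal (N powr p * k)"
proof -
  assume N: "0 \<le> N"
  have "LamN N \<le> (\<integral>\<^sup>+s. ennreal (N powr p) * indicator {0<..k} s \<partial>lborel)"
    unfolding LamN_def
  proof (intro nn_integral_mono)
    fix s
    have "epow p (min (Ue s) (ennreal N)) \<le> ennreal (N powr p)"
    proof (cases "Ue s \<le> ennreal N")
      case True
      then obtain r where r: "Ue s = ennreal r" "0 \<le> r" by (cases "Ue s") (auto simp: top_unique)
      then have "r \<le> N" using True N by (simp add: ennreal_le_iff)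
      then show ?thesis using True r epow_ennreal p by (simp add: powr_mono2)
    next
      case False
      then show ?thesis using N epow_ennreal by simp
    qed
    then show "epow p (min (Ue s) (ennreal N)) * indicator {0<..k} s \<le> ennreal (N powr p) * indicator {0<..k} s"
      by (auto simp: indicator_def)
  qed
  also have "\<dots> = ennreal (N powr p * k)"
    using k0 by (simp add: nn_integral_cmult_indicator ennreal_mult)
  finally show ?thesis .
qed

lemma min_ennreal: "0 \<le> a \<Longrightarrow> 0 \<le> b \<Longrightarrow> min (ennreal a) (ennreal b) = ennreal (min a b)"
  by (cases "a \<le> b") (auto simp: min_def ennreal_le_iff)

lemma holder_app:
  assumes N: "0 \<le> N"
  shows "PN N \<le> ennreal (enn2real G1e powr (1/p) * enn2real (LamN N) powr ((p - 1)/p))"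
proof -
  let ?a = "\<lambda>s. psr s * indicator {0<..k} s"
  let ?b = "\<lambda>s. min (Ur s) N powr (p - 1) * indicator {0<..k} s"
  have LNf: "LamN N = ennreal (enn2real (LamN N))"
    using LamN_fin[OF N] by (rule fin_le_ennreal)
  have IA: "(\<integral>\<^sup>+s. ennreal (?a s powr p) \<partial>lborel) = ennreal (enn2real G1e)"
  proof -
    have "(\<integral>\<^sup>+s. ennreal (?a s powr p) \<partial>lborel) = G1e" unfolding G1e_def
    proof (intro nn_integral_cong)
      fix s show "ennreal (?a s powr p) = epow p (psi M \<phi> s) * indicator {0<..k} s"
        by (cases "s \<in> {0<..k}") (auto simp: psi_real epow_ennreal)
    qed
    then show ?thesis using G1_fin by simp
  qed
  have IB: "(\<integral>\<^sup>+s. ennreal (?b s powr (p/(p-1))) \<partial>lborel) = ennreal (enn2real (LamN N))"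
  proof -
    have "(\<integral>\<^sup>+s. ennreal (?b s powr (p/(p-1))) \<partial>lborel) = LamN N" unfolding LamN_def
    proof (intro nn_integral_cong)
      fix s show "ennreal (?b s powr (p/(p-1))) = epow p (min (Ue s) (ennreal N)) * indicator {0<..k} s"
      proof (cases "s \<in> {0<..k}")
        case True
        have "(min (Ur s) N powr (p - 1)) powr (p/(p-1)) = min (Ur s) N powr p"
          using p by (simp add: powr_powr)
        moreover have "min (Ue s) (ennreal N) = ennreal (min (Ur s) N)"
          using True Ue_Ur[of s] N by (simp add: min_ennreal)
        ultimately show ?thesis using True Ue_Ur[of s] N by (simp add: epow_ennreal)
      qed simp
    qed
    then show ?thesis using LNf by simp
  qed
  have "PN N = (\<integral>\<^sup>+s. ennreal (?a s * ?b s) \<partial>lborel)" unfolding PN_def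
  proof (intro nn_integral_cong)
    fix s show "psi M \<phi> s * ennreal (min (Ur s) N powr (p - 1)) * indicator {0<..k} s = ennreal (?a s * ?b s)"
      by (cases "s \<in> {0<..k}") (auto simp: psi_real ennreal_mult)
  qed
  also have "\<dots> \<le> ennreal (enn2real G1e powr (1/p) * enn2real (LamN N) powr ((p - 1)/p))"
    by (rule holder_nn[OF p _ _ _ _ IA _ IB]) (auto simp: psi_real)
  finally show ?thesis .
qed

end


lemma pow_holder:
  fixes x A m p :: real
  assumes p: "p > 1" and x: "0 \<le> x" and A: "0 \<le> A" and m: "0 < m"
    and h: "x \<le> A powr (1/p) * m powr ((p - 1)/p)"
  shows "x powr p \<le> A * m powr (p - 1)"
proof -
  have "x powr p \<le> (A powr (1/p) * m powr ((p - 1)/p)) powr p"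
    using h x p by (intro powr_mono2) auto
  also have "\<dots> = (A powr (1/p)) powr p * (m powr ((p - 1)/p)) powr p"
    using A m by (simp add: powr_mult)
  also have "\<dots> = A * m powr (p - 1)"
    using p A m by (simp add: powr_powr)
  finally show ?thesis .
qed

context hardyF
begin

definition B :: real where "B = k * c0"
definition G :: real where "G = F - (f - B) powr p / (1 - k) powr (p - 1)"

lemma c0p: "0 < c0" using c0_pos[OF fpos] .

lemma int_psi_comp: "(\<integral>\<^sup>+s. psi M \<phi> s * indicator {k<..1} s \<partial>lborel) = ennreal (f - B)" "B \<le> f"
proof -
  have "(\<integral>\<^sup>+s. psi M \<phi> s * indicator {0<..k} s \<partial>lborel) + (\<integral>\<^sup>+s. psi M \<phi> s * indicator {k<..1} s \<partial>lborel)
      = (\<integral>\<^sup>+s. psi M \<phi> s * indicator {0<..k} s + psi M \<phi> s * indicator {k<..1} s \<partial>lborel)"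
    by (rule nn_integral_add[symmetric]) auto
  also have "\<dots> = (\<integral>\<^sup>+s. psi M \<phi> s * indicator {0<..1} s \<partial>lborel)"
    by (intro nn_integral_cong) (use k0 k1 in \<open>auto simp: indicator_def\<close>)
  also have "\<dots> = ennreal f" by (rule R1)
  finally have e: "ennreal B + (\<integral>\<^sup>+s. psi M \<phi> s * indicator {k<..1} s \<partial>lborel) = ennreal f"
    using int_psi_k unfolding B_def by simp
  then have "(\<integral>\<^sup>+s. psi M \<phi> s * indicator {k<..1} s \<partial>lborel) \<le> ennreal f" by (metis le_iff_add add.commute)
  then obtain y where y: "(\<integral>\<^sup>+s. psi M \<phi> s * indicator {k<..1} s \<partial>lborel) = ennreal y" "0 \<le> y"
    using fin_le_ennreal by (metis enn2real_nonneg)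
  have B0: "0 \<le> B" unfolding B_def using k0 c0p by simp
  have s1: "ennreal (B + y) = ennreal f" using e y(1) ennreal_plus[OF B0 y(2)] by simp
  have "B + y = f" using s1 B0 y(2) f0 by (subst (asm) ennreal_inj) auto
  then show "(\<integral>\<^sup>+s. psi M \<phi> s * indicator {k<..1} s \<partial>lborel) = ennreal (f - B)" "B \<le> f"
    using y by auto
qed

lemma B_pos: "0 < B" unfolding B_def using k0 c0p by simp

lemma holder_part:
  assumes ab: "0 \<le> a" "a < b" and Ge: "Ge = (\<integral>\<^sup>+s. epow p (psi M \<phi> s) * indicator {a<..b} s \<partial>lborel)"
    and Gr: "Ge = ennreal (enn2real Ge)"
    and Ie: "(\<integral>\<^sup>+s. psi M \<phi> s * indicator {a<..b} s \<partial>lborel) = ennreal I" and I0: "0 \<le> I"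
  shows "I powr p \<le> enn2real Ge * (b - a) powr (p - 1)"
proof -
  let ?a = "\<lambda>s. psr s * indicator {a<..b} s"
  let ?b = "\<lambda>s. indicator {a<..b} s :: real"
  have IA: "(\<integral>\<^sup>+s. ennreal (?a s powr p) \<partial>lborel) = ennreal (enn2real Ge)"
  proof -
    have "(\<integral>\<^sup>+s. ennreal (?a s powr p) \<partial>lborel) = Ge" unfolding Ge
    proof (intro nn_integral_cong)
      fix s show "ennreal (?a s powr p) = epow p (psi M \<phi> s) * indicator {a<..b} s"
        using ab by (cases "s \<in> {a<..b}") (auto simp: psi_real epow_ennreal)
    qed
    then show ?thesis using Gr by simp
  qed
  have IB: "(\<integral>\<^sup>+s. ennreal (?b s powr (p/(p-1))) \<partial>lborel) = ennreal (b - a)"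
  proof -
    have "(\<integral>\<^sup>+s. ennreal (?b s powr (p/(p-1))) \<partial>lborel) = (\<integral>\<^sup>+s. indicator {a<..b} s \<partial>lborel)"
      by (intro nn_integral_cong) (auto simp: indicator_def)
    then show ?thesis using ab by simp
  qed
  have "ennreal I = (\<integral>\<^sup>+s. ennreal (?a s * ?b s) \<partial>lborel)" unfolding Ie[symmetric]
  proof (intro nn_integral_cong)
    fix s show "psi M \<phi> s * indicator {a<..b} s = ennreal (?a s * ?b s)"
      using ab by (cases "s \<in> {a<..b}") (auto simp: psi_real)
  qed
  also have "\<dots> \<le> ennreal (enn2real Ge powr (1/p) * (b - a) powr ((p - 1)/p))"
    by (rule holder_nn[OF p _ _ _ _ IA _ IB]) (use ab in \<open>auto simp: psi_real\<close>)
  finally have "I \<le> enn2real Ge powr (1/p) * (b - a) powr ((p - 1)/p)"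
    by (simp add: ennreal_le_iff)
  then show ?thesis using pow_holder[OF p I0 _ _] ab by simp
qed

definition G1 :: real where "G1 = enn2real G1e"
definition G2 :: real where "G2 = enn2real G2e"

lemma G12r: "G1 + G2 = F" "0 \<le> G1" "0 \<le> G2"
proof -
  have "ennreal (G1 + G2) = ennreal G1 + ennreal G2" by (rule ennreal_plus) (simp_all add: G1_def G2_def)
  also have "\<dots> = G1e + G2e" using G1_fin unfolding G1_def G2_def by simp
  also have "\<dots> = ennreal F" by (rule G12)
  finally have gg: "ennreal (G1 + G2) = ennreal F" .
  moreover have "0 \<le> F"
  proof -
    have "0 \<le> enn2real (ennreal F)" by simp
    have "(\<integral>\<^sup>+x. ennreal (\<phi> x) \<partial>M) = ennreal f" by (rule intf)
    show ?thesis
    proof (rule ccontr)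
      assume "\<not> 0 \<le> F"
      then have "ennreal F = 0" by (simp add: ennreal_neg)
      then have "G1e + G2e = 0" using G12 by simp
      then have "G1e = 0" by simp
      then have "G1 = 0" unfolding G1_def by simp
      moreover have "B powr p \<le> G1 * k powr (p - 1)"
        using holder_part[OF _ k0 G1e_def _ int_psi_k] G1_fin B_pos k0 c0p unfolding B_def G1_def by simp
      ultimately show False using B_pos by simp
    qed
  qed
  then show "G1 + G2 = F" using gg by (subst (asm) ennreal_inj) (auto simp: G1_def G2_def)
  show "0 \<le> G1" "0 \<le> G2" unfolding G1_def G2_def by simp_all
qed

lemma B_holder: "B powr p \<le> G1 * k powr (p - 1)"
  using holder_part[OF _ k0 G1e_def _ int_psi_k] G1_fin B_pos k0 c0p unfolding B_def G1_def by simp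

lemma fB_holder: "(f - B) powr p \<le> G2 * (1 - k) powr (p - 1)"
  using holder_part[OF _ k1 G2e_def _ int_psi_comp(1)] G1_fin int_psi_comp(2) k0 unfolding G2_def by simp

end


context hardyF
begin

lemma c0pow: "c0 powr (p - 1) * c0 = c0 powr p"
  using powr_shift1[OF c0p, of p] by simp

lemma real_ineq:
  assumes N: "c0 \<le> N"
  shows "(p - 1) * enn2real (LamN N) + k * c0 powr p \<le> p * G1 powr (1/p) * enn2real (LamN N) powr ((p - 1)/p)"
proof -
  have N0: "0 \<le> N" using N c0p by simp
  define L where "L = enn2real (LamN N)"
  define Hv where "Hv = G1 powr (1/p) * L powr ((p - 1)/p)"
  have Hv0: "0 \<le> Hv" unfolding Hv_def by simp
  have LNf: "LamN N = ennreal L" unfolding L_def using LamN_fin[OF N0] by (rule fin_le_ennreal)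
  have L0: "0 \<le> L" unfolding L_def by simp
  have X: "p / (p - 1) * c0 powr (p - 1) * (k * c0) = p / (p - 1) * (k * c0 powr p)"
    using c0pow by (simp add: mult_ac)
  have "ennreal L + ennreal (p / (p - 1) * (k * c0 powr p)) \<le> ennreal (k * c0 powr p) + ennreal (p / (p - 1)) * PN N"
    using main_ineq[OF fpos N] unfolding X LNf .
  also have "\<dots> \<le> ennreal (k * c0 powr p) + ennreal (p / (p - 1)) * ennreal Hv"
    using holder_app[OF N0] unfolding Hv_def L_def G1_def by (intro add_left_mono mult_left_mono) auto
  also have "\<dots> = ennreal (k * c0 powr p + p / (p - 1) * Hv)"
    using p k0 Hv0 by (simp add: ennreal_mult[symmetric] ennreal_plus[symmetric] del: ennreal_plus)
  finally have "ennreal (L + p / (p - 1) * (k * c0 powr p)) \<le> ennreal (k * c0 powr p + p / (p - 1) * Hv)"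
    using L0 p k0 by (subst ennreal_plus) auto
  then have "L + p / (p - 1) * (k * c0 powr p) \<le> k * c0 powr p + p / (p - 1) * Hv"
    using p k0 Hv0 by (subst (asm) ennreal_le_iff) auto
  then have "(p - 1) * (L + p / (p - 1) * (k * c0 powr p)) \<le> (p - 1) * (k * c0 powr p + p / (p - 1) * Hv)"
    using p by (intro mult_left_mono) auto
  moreover have "(p - 1) * (L + p / (p - 1) * (k * c0 powr p)) = (p - 1) * L + p * (k * c0 powr p)"
    using p by (simp add: distrib_left)
  moreover have "(p - 1) * (k * c0 powr p + p / (p - 1) * Hv) = (p - 1) * (k * c0 powr p) + p * Hv"
    using p by (simp add: distrib_left)
  ultimately have "(p - 1) * L + p * (k * c0 powr p) \<le> (p - 1) * (k * c0 powr p) + p * Hv"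
    by simp
  then show ?thesis unfolding Hv_def L_def by (simp add: algebra_simps)
qed

lemma K0_eq: "B powr p / k powr (p - 1) = k * c0 powr p"
proof -
  have "B powr p = k powr p * c0 powr p" unfolding B_def using k0 c0p by (simp add: powr_mult)
  moreover have "k powr p = k powr (p - 1) * k" using powr_shift1[OF k0, of p] by simp
  ultimately show ?thesis using k0 by simp
qed

lemma K0_le_G1: "k * c0 powr p \<le> G1"
proof -
  have "B powr p / k powr (p - 1) \<le> G1" using B_holder k0 by (simp add: divide_le_eq)
  then show ?thesis using K0_eq by simp
qed

lemma G1_le_G: "G1 \<le> G"
proof -
  have "(f - B) powr p / (1 - k) powr (p - 1) \<le> G2" using fB_holder k1 by (simp add: divide_le_eq)
  then show ?thesis unfolding G_def using G12r by simp
qed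

lemma hk_le: "(f - B) powr p / (1 - k) powr (p - 1) + B powr p / k powr (p - 1) \<le> F"
proof -
  have "(f - B) powr p / (1 - k) powr (p - 1) \<le> G2" using fB_holder k1 by (simp add: divide_le_eq)
  moreover have "B powr p / k powr (p - 1) \<le> G1" using B_holder k0 by (simp add: divide_le_eq)
  ultimately show ?thesis using G12r by simp
qed

lemma LamN_le:
  assumes N: "c0 \<le> N"
  shows "LamN N \<le> ennreal (G * omega_p p (B powr p / (k powr (p - 1) * G)) powr p)"
proof -
  have N0: "0 \<le> N" using N c0p by simp
  have K0p: "0 < k * c0 powr p" using k0 c0p by simp
  have G1p: "0 < G1" using K0_le_G1 K0p by simp
  have "enn2real (LamN N) \<le> G * omega_p p (k * c0 powr p / G) powr p"
    by (rule final_alg[OF p _ G1p G1_le_G _ _ real_ineq[OF N]]) (use K0p K0_le_G1 G1_le_G in auto)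
  moreover have "k * c0 powr p / G = B powr p / (k powr (p - 1) * G)"
    unfolding K0_eq[symmetric] by (simp add: divide_divide_eq_left)
  ultimately have "enn2real (LamN N) \<le> G * omega_p p (B powr p / (k powr (p - 1) * G)) powr p" by simp
  then show ?thesis using LamN_fin[OF N0] fin_le_ennreal by (metis ennreal_leI)
qed

lemma Lam_final:
  assumes tok: "tree_ok M T C" and K[measurable]: "K \<in> sets M" and Kk: "measure M K = k"
  shows "(\<integral>\<^sup>+x. epow p (dyadic_max M T \<phi> x) * indicator K x \<partial>M)
      \<le> ennreal (G * omega_p p (B powr p / (k powr (p - 1) * G)) powr p)"
proof -
  let ?u = "dyadic_max M T \<phi>"
  let ?X = "ennreal (G * omega_p p (B powr p / (k powr (p - 1) * G)) powr p)"
  let ?w = "\<lambda>y. ennreal (p * y powr (p - 1))"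
  have um[measurable]: "?u \<in> borel_measurable M" using dmax_measurable[OF tok] .
  have "(\<integral>\<^sup>+x. epow p (?u x) * indicator K x \<partial>M)
      = (\<integral>\<^sup>+x. (\<integral>\<^sup>+y. ?w y * indicator {y. 0 \<le> y \<and> ennreal y < ?u x} y \<partial>lborel) * indicator K x \<partial>M)"
    by (intro nn_integral_cong) (simp only: epow_integral[OF p])
  also have "\<dots> = (\<integral>\<^sup>+y. ?w y * indicator {0..} y * emeasure M ({x\<in>space M. ennreal y < ?u x} \<inter> K) \<partial>lborel)"
    by (rule layer_cake[OF sfM]) auto
  also have "\<dots> \<le> (\<integral>\<^sup>+y. ?w y * indicator {0..} y * nu y \<partial>lborel)"
  proof (intro nn_integral_mono)
    fix y
    show "?w y * indicator {0..} y * emeasure M ({x\<in>space M. ennreal y < ?u x} \<inter> K) \<le> ?w y * indicator {0..} y * nu y"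
    proof (cases "0 \<le> y")
      case True
      then show ?thesis using H1[OF tok K Kk k0 True] unfolding nu_def by (intro mult_left_mono) auto
    qed simp
  qed
  also have "\<dots> \<le> (\<integral>\<^sup>+y. (SUP n::nat. ?w y * indicator {0..<real n} y * nu y) \<partial>lborel)"
  proof (intro nn_integral_mono)
    fix y
    show "?w y * indicator {0..} y * nu y \<le> (SUP n::nat. ?w y * indicator {0..<real n} y * nu y)"
    proof (cases "0 \<le> y")
      case True
      obtain n :: nat where "y < real n" using reals_Archimedean2 by blast
      then have "?w y * indicator {0..} y * nu y = ?w y * indicator {0..<real n} y * nu y" using True by simp
      also have "\<dots> \<le> (SUP n::nat. ?w y * indicator {0..<real n} y * nu y)" by (rule SUP_upper) simp
      finally show ?thesis .
    qed simp
  qed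
  also have "\<dots> = (SUP n::nat. (\<integral>\<^sup>+y. ?w y * indicator {0..<real n} y * nu y \<partial>lborel))"
  proof (rule nn_integral_monotone_convergence_SUP)
    show "incseq (\<lambda>n y. ?w y * indicator {0..<real n} y * nu y)"
      by (intro monoI le_funI mult_right_mono mult_left_mono) (auto simp: indicator_def)
  qed measurable
  also have "\<dots> \<le> ?X"
  proof (rule SUP_least)
    fix n :: nat
    have "(\<integral>\<^sup>+y. ?w y * indicator {0..<real n} y * nu y \<partial>lborel) \<le> (\<integral>\<^sup>+y. ?w y * indicator {0..<max (real n) c0} y * nu y \<partial>lborel)"
      by (intro nn_integral_mono mult_right_mono mult_left_mono) (auto simp: indicator_def)
    also have "\<dots> = LamN (max (real n) c0)" using c0p by (intro LamN_lc[symmetric]) auto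
    also have "\<dots> \<le> ?X" by (rule LamN_le) simp
    finally show "(\<integral>\<^sup>+y. ?w y * indicator {0..<real n} y * nu y \<partial>lborel) \<le> ?X" .
  qed
  finally show ?thesis .
qed

end


lemma set_bdd:
  fixes p f F k :: real
  assumes p: "p > 1" and k: "0 < k" "k < 1" and F0: "0 \<le> F"
  shows "bdd_above {(F - (f - B) powr p / (1 - k) powr (p - 1)) *
            omega_p p (B powr p / (k powr (p - 1) * (F - (f - B) powr p / (1 - k) powr (p - 1)))) powr p
          | B. B \<in> {0..f} \<and>
               (f - B) powr p / (1 - k) powr (p - 1) + B powr p / k powr (p - 1) \<le> F}"
proof (rule bdd_aboveI[of _ "F * (p / (p - 1)) powr p"])
  fix v assume "v \<in> {(F - (f - B) powr p / (1 - k) powr (p - 1)) *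
            omega_p p (B powr p / (k powr (p - 1) * (F - (f - B) powr p / (1 - k) powr (p - 1)))) powr p
          | B. B \<in> {0..f} \<and>
               (f - B) powr p / (1 - k) powr (p - 1) + B powr p / k powr (p - 1) \<le> F}"
  then obtain B where B: "B \<in> {0..f}" "(f - B) powr p / (1 - k) powr (p - 1) + B powr p / k powr (p - 1) \<le> F"
    and v: "v = (F - (f - B) powr p / (1 - k) powr (p - 1)) *
            omega_p p (B powr p / (k powr (p - 1) * (F - (f - B) powr p / (1 - k) powr (p - 1)))) powr p"
    by blast
  define G where "G = F - (f - B) powr p / (1 - k) powr (p - 1)"
  define y where "y = B powr p / (k powr (p - 1) * G)"
  have a0: "0 \<le> (f - B) powr p / (1 - k) powr (p - 1)" by simp
  have b0: "0 \<le> B powr p / k powr (p - 1)" by simp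
  have bG: "B powr p / k powr (p - 1) \<le> G" using B(2) unfolding G_def by simp
  have G0: "0 \<le> G" using bG b0 by linarith
  have GF: "G \<le> F" unfolding G_def using a0 by simp
  have y0: "0 \<le> y" unfolding y_def using G0 by simp
  have y1: "y \<le> 1"
  proof (cases "G = 0")
    case True then show ?thesis unfolding y_def by simp
  next
    case False
    then have "0 < G" using G0 by simp
    then have "y = (B powr p / k powr (p - 1)) / G" unfolding y_def by (simp add: divide_divide_eq_left)
    also have "\<dots> \<le> 1" using divide_le_eq_1_pos[OF \<open>0 < G\<close>] bG by blast
    finally show ?thesis .
  qed
  have om: "omega_p p y \<in> {1..p/(p-1)}" using omega_p_props(1)[OF p y0 y1] .
  have "omega_p p y powr p \<le> (p / (p - 1)) powr p" using om p by (intro powr_mono2) auto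
  then have "G * omega_p p y powr p \<le> F * (p / (p - 1)) powr p"
    using G0 GF by (intro mult_mono) auto
  then show "v \<le> F * (p / (p - 1)) powr p" unfolding v G_def[symmetric] y_def[symmetric] .
qed

theorem corollary3p2:
  fixes M :: "'a measure" and T :: "'a set set" and p f F k :: real
  assumes "prob_space M" and "non_atomic M" and "is_tree M T"
    and "p > 1" and "0 < f" and "f powr p \<le> F" and "0 < k" and "k < 1"
  shows "bellman M T p f F k \<le> ennreal (Sup {(F - (f - B) powr p / (1 - k) powr (p - 1)) *
            omega_p p (B powr p / (k powr (p - 1) * (F - (f - B) powr p / (1 - k) powr (p - 1)))) powr p
          | B. B \<in> {0..f} \<and>
               (f - B) powr p / (1 - k) powr (p - 1) + B powr p / k powr (p - 1) \<le> F})"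
proof -
  note ps = assms(1) and p = assms(4) and fp = assms(5) and fF = assms(6) and k0 = assms(7) and k1 = assms(8)
  obtain C where tok: "tree_ok M T C" using is_tree_obtain[OF assms(3)] by blast
  let ?S = "{(F - (f - B) powr p / (1 - k) powr (p - 1)) *
            omega_p p (B powr p / (k powr (p - 1) * (F - (f - B) powr p / (1 - k) powr (p - 1)))) powr p
          | B. B \<in> {0..f} \<and>
               (f - B) powr p / (1 - k) powr (p - 1) + B powr p / k powr (p - 1) \<le> F}"
  have "0 \<le> f powr p" by simp
  then have F0: "0 \<le> F" using fF by linarith
  have bdd: "bdd_above ?S" by (rule set_bdd[OF p k0 k1 F0])
  show ?thesis unfolding bellman_def
  proof (rule SUP_least)
    fix z assume "z \<in> {(\<phi>, K). \<phi> \<in> borel_measurable M \<and> (\<forall>x. 0 \<le> \<phi> x) \<and>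
        (\<integral>\<^sup>+ x. ennreal (\<phi> x) \<partial>M) = ennreal f \<and>
        (\<integral>\<^sup>+ x. ennreal (\<phi> x powr p) \<partial>M) = ennreal F \<and>
        K \<in> sets M \<and> measure M K = k}"
    note mem = this
    obtain \<phi> K where z: "z = (\<phi>, K)" by (cases z)
    have props: "\<phi> \<in> borel_measurable M \<and> (\<forall>x. 0 \<le> \<phi> x) \<and>
        (\<integral>\<^sup>+ x. ennreal (\<phi> x) \<partial>M) = ennreal f \<and>
        (\<integral>\<^sup>+ x. ennreal (\<phi> x powr p) \<partial>M) = ennreal F \<and>
        K \<in> sets M \<and> measure M K = k" using mem unfolding z by simp
    then have phim: "\<phi> \<in> borel_measurable M" and phi0: "\<forall>x. 0 \<le> \<phi> x"
      and intf: "(\<integral>\<^sup>+ x. ennreal (\<phi> x) \<partial>M) = ennreal f"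
      and intF: "(\<integral>\<^sup>+ x. ennreal (\<phi> x powr p) \<partial>M) = ennreal F"
      and K: "K \<in> sets M" and Kk: "measure M K = k" by blast+
    interpret H: hardyF M \<phi> f p k F
      by (simp add: hardyF_def hardy_def hardyF_axioms_def hardy_axioms_def rearr_def ps phim phi0 intf fp p k0 k1 intF less_imp_le)
    have "(\<integral>\<^sup>+x. epow p (dyadic_max M T \<phi> x) * indicator K x \<partial>M)
        \<le> ennreal (H.G * omega_p p (H.B powr p / (k powr (p - 1) * H.G)) powr p)"
      by (rule H.Lam_final[OF tok K Kk])
    also have "H.G * omega_p p (H.B powr p / (k powr (p - 1) * H.G)) powr p \<in> ?S"
      unfolding H.G_def using H.B_pos H.int_psi_comp(2) H.hk_le by auto
    then have "ennreal (H.G * omega_p p (H.B powr p / (k powr (p - 1) * H.G)) powr p) \<le> ennreal (Sup ?S)"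
      by (intro ennreal_leI cSup_upper bdd)
    finally show "(case z of (\<phi>, K) \<Rightarrow> \<integral>\<^sup>+ x. epow p (dyadic_max M T \<phi> x) * indicator K x \<partial>M) \<le> ennreal (Sup ?S)"
      unfolding z by simp
  qed
qed


end
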